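(* Let $J^*_T=\inf_{\pi\in\Pi}J_T(\pi)$ and let $\Pi^*_T=\{\pi\in\Pi: J_T(\pi)=J^*_T\}$ for $T\in[0,\infty]$. Then: (1) $J^*_T$ does not depend on $T$, i.e. $J^*_T=J^*_0=:J^*$ for all $T\in[0,\infty]$; (2) for all $T_1<T_2$ in $[0,\infty]$, $\Pi^*_{T_1}\subseteq\Pi^*_{T_2}$; (3) for every $p_0\in|G|^k$ and every $T>D_G+J^*/\phi_{\min}$ (with $T$ finite), $\Pi^*_T\cap\Pi_{p_0}\neq\emptyset$, where $\Pi_{p_0}=\{\pi\in\Pi:\pi(0)=p_0\}$.
   Context: Let $G=(V,E,A,\phi)$ be a finite connected undirected graph with node set $V$, edge set $E$, edge lengths $A:E\to\mathbb{R}_{>0}$ and node weights $\phi:V\to\mathbb{R}_{>0}$; $\phi_{\min}=\min_v\phi(v)$. Let $|G|$ be its metric graph (each edge $e$ realized as a closed interval of length $A(e)$ glued at its endpoints) with shortest-path metric $d$, and let $D_G$ be the diameter of $(|G|,d)$. Fix $k\ge1$ robots $r_1,\dots,r_k$, and equip $|G|^k$ with $d_k(p,p')=\max_i d(p_i,p'_i)$. Feasible joint strategies: $\Pi=\{\pi\in C([0,\infty),|G|^k):\ d_k(\pi(t),\pi(t'))\le|t-t'|\ \forall t,t'\ge0\}$, $\pi=(\pi_{r_1},\dots,\pi_{r_k})$. For $v\in V$, $t\ge0$: $\tau^\pi(v,t)=\sup\{t'\le t:\pi_r(t')=v\text{ for some }r\}$ if nonempty, else $0$; $L^\pi_v(t)=t-\tau^\pi(v,t)$;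 $M^\pi(t)=\max_{v}\phi(v)L^\pi_v(t)$. For finite $T\ge 0$, $J_T(\pi)=\sup_{t\ge T}M^\pi(t)\in[0,\infty]$; $J_\infty(\pi)=\limsup_{t\to\infty}M^\pi(t)$. *)

theory Defs
  imports "HOL-Analysis.Analysis" "HOL-Library.Liminf_Limsup"
begin

text \<open>Weighted graph G = (V, E, A, phi): finite node set V, finite edge set E, each
 edge e has two endpoints ends e (an undirected edge, loops allowed), a length A e > 0,
 node weights phi v > 0, connected.\<close>

definition wf_graph :: "'v set \<Rightarrow> 'e set \<Rightarrow> ('e \<Rightarrow> 'v \<times> 'v) \<Rightarrow> ('e \<Rightarrow> real) \<Rightarrow> ('v \<Rightarrow> real) \<Rightarrow> bool" where
  "wf_graph V E ends A phi \<longleftrightarrow>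
     finite V \<and> V \<noteq> {} \<and> finite E \<and>
     (\<forall>e\<in>E. fst (ends e) \<in> V \<and> snd (ends e) \<in> V) \<and>
     (\<forall>e\<in>E. A e > 0) \<and> (\<forall>v\<in>V. phi v > 0) \<and>
     (\<forall>u\<in>V. \<forall>v\<in>V. (u, v) \<in> ({(a, b). \<exists>e\<in>E. ends e = (a, b) \<or> ends e = (b, a)})\<^sup>*)"

text \<open>Points of the metric graph |G|: a node, or an interior point of an edge e at
 distance s \<in> (0, A e) from its first endpoint.\<close>
datatype ('v, 'e) gpt = Vtx 'v | EPt 'e real

definition gpoints :: "'v set \<Rightarrow> 'e set \<Rightarrow> ('e \<Rightarrow> real) \<Rightarrow> ('v, 'e) gpt set" where
  "gpoints V E A = Vtx ` V \<union> {EPt e s | e s. e \<in> E \<and> 0 < s \<and> s < A e}"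

text \<open>Coordinates of a point on the closed interval realizing edge e.\<close>
fun gpos :: "('e \<Rightarrow> 'v \<times> 'v) \<Rightarrow> ('e \<Rightarrow> real) \<Rightarrow> ('v, 'e) gpt \<Rightarrow> 'e \<Rightarrow> real set" where
  "gpos ends A (Vtx v) e = (if fst (ends e) = v then {0} else {}) \<union> (if snd (ends e) = v then {A e} else {})"
| "gpos ends A (EPt e' s) e = (if e' = e \<and> 0 < s \<and> s < A e then {s} else {})"

inductive gwalk :: "'v set \<Rightarrow> 'e set \<Rightarrow> ('e \<Rightarrow> 'v \<times> 'v) \<Rightarrow> ('e \<Rightarrow> real) \<Rightarrow>
    ('v, 'e) gpt \<Rightarrow> ('v, 'e) gpt \<Rightarrow> real \<Rightarrow> bool"
  for V E ends A where
  refl: "x \<in> gpoints V E A \<Longrightarrow> gwalk V E ends A x x 0"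
| step: "e \<in> E \<Longrightarrow> s \<in> gpos ends A x e \<Longrightarrow> t \<in> gpos ends A y e \<Longrightarrow>
         gwalk V E ends A y z c \<Longrightarrow> gwalk V E ends A x z (\<bar>s - t\<bar> + c)"

definition gdist :: "'v set \<Rightarrow> 'e set \<Rightarrow> ('e \<Rightarrow> 'v \<times> 'v) \<Rightarrow> ('e \<Rightarrow> real) \<Rightarrow>
    ('v, 'e) gpt \<Rightarrow> ('v, 'e) gpt \<Rightarrow> real" where
  "gdist V E ends A x y = Inf {c. gwalk V E ends A x y c}"

definition gdiam :: "'v set \<Rightarrow> 'e set \<Rightarrow> ('e \<Rightarrow> 'v \<times> 'v) \<Rightarrow> ('e \<Rightarrow> real) \<Rightarrow> real" where
  "gdiam V E ends A = Sup {gdist V E ends A x y | x y. x \<in> gpoints V E A \<and> y \<in> gpoints V E A}"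

text \<open>Joint strategies of k robots (robots indexed 0..k-1): str t i is the position of
 robot i at time t; only t \<ge> 0 and i < k are relevant.\<close>
definition strategies :: "'v set \<Rightarrow> 'e set \<Rightarrow> ('e \<Rightarrow> 'v \<times> 'v) \<Rightarrow> ('e \<Rightarrow> real) \<Rightarrow> nat \<Rightarrow>
    (real \<Rightarrow> nat \<Rightarrow> ('v, 'e) gpt) set" where
  "strategies V E ends A k =
     {str. (\<forall>t\<ge>0. \<forall>i<k. str t i \<in> gpoints V E A) \<and>
          (\<forall>t\<ge>0. \<forall>t'\<ge>0. \<forall>i<k. gdist V E ends A (str t i) (str t' i) \<le> \<bar>t - t'\<bar>)}"

definition last_visit :: "nat \<Rightarrow> (real \<Rightarrow> nat \<Rightarrow> ('v, 'e) gpt) \<Rightarrow> 'v \<Rightarrow> real \<Rightarrow> real" where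
  "last_visit k str v t =
     (let S = {t'. 0 \<le> t' \<and> t' \<le> t \<and> (\<exists>i<k. str t' i = Vtx v)} in if S = {} then 0 else Sup S)"

definition idle :: "nat \<Rightarrow> (real \<Rightarrow> nat \<Rightarrow> ('v, 'e) gpt) \<Rightarrow> 'v \<Rightarrow> real \<Rightarrow> real" where
  "idle k str v t = t - last_visit k str v t"

definition wlat :: "'v set \<Rightarrow> ('v \<Rightarrow> real) \<Rightarrow> nat \<Rightarrow> (real \<Rightarrow> nat \<Rightarrow> ('v, 'e) gpt) \<Rightarrow> real \<Rightarrow> real" where
  "wlat V phi k str t = Max ((\<lambda>v. phi v * idle k str v t) ` V)"

text \<open>J_T for T \<in> [0, \<infinity>], T given as an extended real.\<close>
definition cost :: "'v set \<Rightarrow> ('v \<Rightarrow> real) \<Rightarrow> nat \<Rightarrow> ereal \<Rightarrow> (real \<Rightarrow> nat \<Rightarrow> ('v, 'e) gpt) \<Rightarrow> ereal" where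
  "cost V phi k T str =
     (if T = \<infinity> then Limsup at_top (\<lambda>t. ereal (wlat V phi k str t))
      else (SUP t\<in>{real_of_ereal T..}. ereal (wlat V phi k str t)))"

definition opt_cost :: "'v set \<Rightarrow> 'e set \<Rightarrow> ('e \<Rightarrow> 'v \<times> 'v) \<Rightarrow> ('e \<Rightarrow> real) \<Rightarrow> ('v \<Rightarrow> real) \<Rightarrow> nat \<Rightarrow> ereal \<Rightarrow> ereal" where
  "opt_cost V E ends A phi k T = (INF str\<in>strategies V E ends A k. cost V phi k T str)"

definition opt_strategies :: "'v set \<Rightarrow> 'e set \<Rightarrow> ('e \<Rightarrow> 'v \<times> 'v) \<Rightarrow> ('e \<Rightarrow> real) \<Rightarrow> ('v \<Rightarrow> real) \<Rightarrow> nat \<Rightarrow> ereal \<Rightarrow>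
    (real \<Rightarrow> nat \<Rightarrow> ('v, 'e) gpt) set" where
  "opt_strategies V E ends A phi k T =
     {str \<in> strategies V E ends A k. cost V phi k T str = opt_cost V E ends A phi k T}"

end

theory Submission
  imports Defs "HOL-Library.Diagonal_Subsequence" "HOL-Library.Countable"
begin

definition ptE :: "('e \<Rightarrow> 'v \<times> 'v) \<Rightarrow> ('e \<Rightarrow> real) \<Rightarrow> 'e \<Rightarrow> real \<Rightarrow> ('v,'e) gpt" where
  "ptE ends A e u = (if u = 0 then Vtx (fst (ends e)) else if u = A e then Vtx (snd (ends e)) else EPt e u)"

context
  fixes V :: "'v set" and E :: "'e set" and ends :: "'e \<Rightarrow> 'v \<times> 'v"
    and A :: "'e \<Rightarrow> real" and phi :: "'v \<Rightarrow> real"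
  assumes wf: "wf_graph V E ends A phi"
begin

lemma wfV: "finite V" "V \<noteq> {}" "finite E" and wfE: "e \<in> E \<Longrightarrow> fst (ends e) \<in> V \<and> snd (ends e) \<in> V"
  and wfA: "e \<in> E \<Longrightarrow> A e > 0" and wfphi: "v \<in> V \<Longrightarrow> phi v > 0"
  using wf unfolding wf_graph_def by auto

lemma wfconn: "u \<in> V \<Longrightarrow> v \<in> V \<Longrightarrow> (u, v) \<in> ({(a, b). \<exists>e\<in>E. ends e = (a, b) \<or> ends e = (b, a)})\<^sup>*"
  using wf unfolding wf_graph_def by auto

lemma gpos_pt: assumes "s \<in> gpos ends A x e" "e \<in> E"
  shows "x \<in> gpoints V E A \<and> 0 \<le> s \<and> s \<le> A e \<and> x = ptE ends A e s"
  using assms wfA[OF assms(2)] wfE[OF assms(2)]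
  by (cases x) (auto simp: gpoints_def ptE_def split: if_splits)

lemma pt_gpos: assumes "e \<in> E" "0 \<le> u" "u \<le> A e"
  shows "ptE ends A e u \<in> gpoints V E A \<and> u \<in> gpos ends A (ptE ends A e u) e"
  using assms wfA[OF assms(1)] wfE[OF assms(1)]
  by (auto simp: gpoints_def ptE_def)

lemma gwalk_pts: "gwalk V E ends A x z c \<Longrightarrow> x \<in> gpoints V E A \<and> z \<in> gpoints V E A \<and> c \<ge> 0"
  by (induction rule: gwalk.induct) (auto dest: gpos_pt)

lemma gwalk_append: "gwalk V E ends A x y c1 \<Longrightarrow> gwalk V E ends A y z c2 \<Longrightarrow> gwalk V E ends A x z (c1 + c2)"
proof (induction arbitrary: z c2 rule: gwalk.induct)
  case (refl x) then show ?case by simp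
next
  case (step e s x t y z' c)
  have "gwalk V E ends A x z (\<bar>s - t\<bar> + (c + c2))"
    by (rule gwalk.step[OF step(1,2,3)]) (rule step.IH[OF step.prems])
  then show ?case by (simp add: add.assoc)
qed

lemma gwalk_edge: assumes "e \<in> E" "s \<in> gpos ends A x e" "t \<in> gpos ends A y e"
  shows "gwalk V E ends A x y \<bar>s - t\<bar>"
proof -
  have "y \<in> gpoints V E A" using gpos_pt[OF assms(3,1)] by blast
  then have "gwalk V E ends A y y 0" by (rule gwalk.refl)
  from gwalk.step[OF assms this] show ?thesis by simp
qed

lemma gwalk_rev: "gwalk V E ends A x z c \<Longrightarrow> gwalk V E ends A z x c"
proof (induction rule: gwalk.induct)
  case (refl x) then show ?case by (rule gwalk.refl)
next
  case (step e s x t y z c)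
  have "gwalk V E ends A y x \<bar>t - s\<bar>" by (rule gwalk_edge[OF step(1,3,2)])
  from gwalk_append[OF step.IH this] show ?case by (simp add: abs_minus_commute add.commute)
qed

lemma gwalk_vtx: assumes "u \<in> V" "v \<in> V" shows "\<exists>c. gwalk V E ends A (Vtx u) (Vtx v) c"
proof -
  have "(u, v) \<in> ({(a, b). \<exists>e\<in>E. ends e = (a, b) \<or> ends e = (b, a)})\<^sup>*" by (rule wfconn[OF assms])
  then show ?thesis using assms(2)
  proof (induction rule: converse_rtrancl_induct)
    case base
    then show ?case using gwalk.refl[of "Vtx v" V E A ends] by (auto simp: gpoints_def)
  next
    case (step a w)
    then obtain c where c: "gwalk V E ends A (Vtx w) (Vtx v) c" by auto
    from step(1) obtain e where e: "e \<in> E" "ends e = (a, w) \<or> ends e = (w, a)" by auto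
    have "\<exists>s t. s \<in> gpos ends A (Vtx a) e \<and> t \<in> gpos ends A (Vtx w) e"
    proof (cases "ends e = (a, w)")
      case True
      then have "0 \<in> gpos ends A (Vtx a) e" "A e \<in> gpos ends A (Vtx w) e" by auto
      then show ?thesis by blast
    next
      case False
      then have "ends e = (w, a)" using e by auto
      then have "A e \<in> gpos ends A (Vtx a) e" "0 \<in> gpos ends A (Vtx w) e" by auto
      then show ?thesis by blast
    qed
    then obtain s t where "s \<in> gpos ends A (Vtx a) e" "t \<in> gpos ends A (Vtx w) e" by blast
    from gwalk.step[OF e(1) this c] show ?case by blast
  qed
qed

lemma gwalk_to_vtx: assumes "x \<in> gpoints V E A"
  shows "\<exists>v\<in>V. \<exists>c. gwalk V E ends A x (Vtx v) c \<and> c \<le> Max (insert 0 (A ` E))"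
proof -
  have fin: "finite (insert 0 (A ` E))" using wfV by simp
  show ?thesis
  proof (cases x)
    case (Vtx v)
    have "0 \<le> Max (insert 0 (A ` E))" using fin by simp
    then show ?thesis using assms gwalk.refl[OF assms] Vtx by (auto simp: gpoints_def intro!: bexI[of _ v])
  next
    case (EPt e s)
    then have es: "e \<in> E" "0 < s" "s < A e" using assms by (auto simp: gpoints_def)
    have "s \<in> gpos ends A x e" "0 \<in> gpos ends A (Vtx (fst (ends e))) e" using es EPt by auto
    from gwalk_edge[OF es(1) this] have "gwalk V E ends A x (Vtx (fst (ends e))) s" using es by simp
    moreover have "s \<le> Max (insert 0 (A ` E))" using es fin by (meson Max_ge image_eqI insertI2 less_imp_le order_trans)
    ultimately show ?thesis using wfE[OF es(1)] by blast
  qed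
qed

lemma gwalk_ex: assumes "x \<in> gpoints V E A" "y \<in> gpoints V E A" shows "\<exists>c. gwalk V E ends A x y c"
proof -
  obtain u c1 where u: "u \<in> V" "gwalk V E ends A x (Vtx u) c1" using gwalk_to_vtx[OF assms(1)] by blast
  obtain w c2 where w: "w \<in> V" "gwalk V E ends A y (Vtx w) c2" using gwalk_to_vtx[OF assms(2)] by blast
  obtain c3 where "gwalk V E ends A (Vtx u) (Vtx w) c3" using gwalk_vtx[OF u(1) w(1)] by blast
  from gwalk_append[OF u(2) gwalk_append[OF this gwalk_rev[OF w(2)]]] show ?thesis by blast
qed

abbreviation "gd \<equiv> gdist V E ends A"
abbreviation "GP \<equiv> gpoints V E A"

lemma gd_le: "gwalk V E ends A x y c \<Longrightarrow> gd x y \<le> c"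
  unfolding gdist_def by (rule cInf_lower) (auto intro!: bdd_belowI[of _ 0] dest: gwalk_pts)

lemma gd_nonneg: assumes "x \<in> GP" "y \<in> GP" shows "gd x y \<ge> 0"
  unfolding gdist_def using gwalk_ex[OF assms] by (auto intro!: cInf_greatest dest: gwalk_pts)

lemma gd_refl: assumes "x \<in> GP" shows "gd x x = 0"
  using gd_le[OF gwalk.refl[OF assms]] gd_nonneg[OF assms assms] by simp

lemma gd_sym: assumes "x \<in> GP" "y \<in> GP" shows "gd x y = gd y x"
proof -
  have "{c. gwalk V E ends A x y c} = {c. gwalk V E ends A y x c}" using gwalk_rev by blast
  then show ?thesis unfolding gdist_def by simp
qed

lemma gd_less: assumes "x \<in> GP" "y \<in> GP" "gd x y < b" shows "\<exists>c. gwalk V E ends A x y c \<and> c < b"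
  using assms gwalk_ex[OF assms(1,2)] unfolding gdist_def by (metis cInf_lessD mem_Collect_eq empty_iff)

lemma gd_tri: assumes "x \<in> GP" "y \<in> GP" "z \<in> GP" shows "gd x z \<le> gd x y + gd y z"
proof (rule ccontr)
  assume "\<not> ?thesis"
  then have h: "gd x y + gd y z < gd x z" by simp
  define d where "d = (gd x z - gd x y - gd y z) / 2"
  have d: "d > 0" using h by (simp add: d_def)
  obtain c1 where c1: "gwalk V E ends A x y c1" "c1 < gd x y + d" using gd_less[OF assms(1,2)] d by (meson less_add_same_cancel1)
  obtain c2 where c2: "gwalk V E ends A y z c2" "c2 < gd y z + d" using gd_less[OF assms(2,3)] d by (meson less_add_same_cancel1)
  have "gd x z \<le> c1 + c2" by (rule gd_le[OF gwalk_append[OF c1(1) c2(1)]])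
  moreover have "2 * d = gd x z - gd x y - gd y z" by (simp add: d_def)
  ultimately show False using c1(2) c2(2) by linarith
qed

lemma gd_pt: assumes "e \<in> E" "0 \<le> u" "u \<le> A e" "0 \<le> w" "w \<le> A e"
  shows "gd (ptE ends A e u) (ptE ends A e w) \<le> \<bar>u - w\<bar>"
  using gd_le[OF gwalk_edge[OF assms(1) conjunct2[OF pt_gpos[OF assms(1,2,3)]] conjunct2[OF pt_gpos[OF assms(1,4,5)]]]] .


lemma glue:
  assumes L1: "\<forall>a b. lo \<le> a \<longrightarrow> a \<le> m \<longrightarrow> lo \<le> b \<longrightarrow> b \<le> m \<longrightarrow> gd (f a) (f b) \<le> \<bar>a - b\<bar>"
    and L2: "\<forall>a b. m \<le> a \<longrightarrow> a \<le> hi \<longrightarrow> m \<le> b \<longrightarrow> b \<le> hi \<longrightarrow> gd (f a) (f b) \<le> \<bar>a - b\<bar>"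
    and P: "\<forall>a. lo \<le> a \<longrightarrow> a \<le> hi \<longrightarrow> f a \<in> GP" and "lo \<le> m" "m \<le> hi"
  shows "\<forall>a b. lo \<le> a \<longrightarrow> a \<le> hi \<longrightarrow> lo \<le> b \<longrightarrow> b \<le> hi \<longrightarrow> gd (f a) (f b) \<le> \<bar>a - b\<bar>"
proof (intro allI impI)
  fix a b assume ab: "lo \<le> a" "a \<le> hi" "lo \<le> b" "b \<le> hi"
  have m: "f m \<in> GP" using P assms(4,5) by auto
  have fa: "f a \<in> GP" "f b \<in> GP" using P ab by auto
  show "gd (f a) (f b) \<le> \<bar>a - b\<bar>"
  proof (cases "a \<le> m")
    case a: True
    show ?thesis
    proof (cases "b \<le> m")
      case True then show ?thesis using L1 a ab by auto
    next
      case False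
      have "gd (f a) (f b) \<le> gd (f a) (f m) + gd (f m) (f b)" by (rule gd_tri[OF fa(1) m fa(2)])
      also have "\<dots> \<le> \<bar>a - m\<bar> + \<bar>m - b\<bar>"
      proof (intro add_mono)
        show "gd (f a) (f m) \<le> \<bar>a - m\<bar>" using L1 a ab assms(4) by blast
        show "gd (f m) (f b) \<le> \<bar>m - b\<bar>" using L2[rule_format, of m b] False ab assms(5) by simp
      qed
      finally show ?thesis using a False by linarith
    qed
  next
    case a: False
    show ?thesis
    proof (cases "b \<le> m")
      case False then show ?thesis using L2 a ab by auto
    next
      case True
      have "gd (f a) (f b) \<le> gd (f a) (f m) + gd (f m) (f b)" by (rule gd_tri[OF fa(1) m fa(2)])
      also have "\<dots> \<le> \<bar>a - m\<bar> + \<bar>m - b\<bar>"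
      proof (intro add_mono)
        show "gd (f a) (f m) \<le> \<bar>a - m\<bar>" using L2[rule_format, of a m] a ab assms(5) by simp
        show "gd (f m) (f b) \<le> \<bar>m - b\<bar>" using L1 True ab assms(4) by blast
      qed
      finally show ?thesis using a True by linarith
    qed
  qed
qed

lemma gwalk_path: "gwalk V E ends A x z c \<Longrightarrow> \<exists>p. p 0 = x \<and> p c = z \<and> (\<forall>a. 0 \<le> a \<longrightarrow> a \<le> c \<longrightarrow> p a \<in> GP)
   \<and> (\<forall>a b. 0 \<le> a \<longrightarrow> a \<le> c \<longrightarrow> 0 \<le> b \<longrightarrow> b \<le> c \<longrightarrow> gd (p a) (p b) \<le> \<bar>a - b\<bar>)"
proof (induction rule: gwalk.induct)
  case (refl x)
  show ?case using refl gd_refl[OF refl] by (intro exI[of _ "\<lambda>_. x"]) auto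
next
  case (step e s x t y z c)
  obtain p where p: "p 0 = y" "p c = z" "\<forall>a. 0 \<le> a \<longrightarrow> a \<le> c \<longrightarrow> p a \<in> GP"
    "\<forall>a b. 0 \<le> a \<longrightarrow> a \<le> c \<longrightarrow> 0 \<le> b \<longrightarrow> b \<le> c \<longrightarrow> gd (p a) (p b) \<le> \<bar>a - b\<bar>"
    using step.IH by blast
  have c0: "c \<ge> 0" using gwalk_pts[OF step(4)] by simp
  have xs: "0 \<le> s" "s \<le> A e" "x = ptE ends A e s" using gpos_pt[OF step(2,1)] by auto
  have yt: "0 \<le> t" "t \<le> A e" "y = ptE ends A e t" using gpos_pt[OF step(3,1)] by auto
  define \<delta> where "\<delta> = \<bar>s - t\<bar>"
  define pos where "pos a = (if s \<le> t then s + a else s - a)" for a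
  define q where "q a = (if a \<le> \<delta> then ptE ends A e (pos a) else p (a - \<delta>))" for a
  have posr: "0 \<le> pos a \<and> pos a \<le> A e" if "0 \<le> a" "a \<le> \<delta>" for a
    using that xs yt by (auto simp: pos_def \<delta>_def)
  have posd: "pos \<delta> = t" by (auto simp: pos_def \<delta>_def)
  have qd: "q \<delta> = y" using yt posd by (simp add: q_def)
  have q0: "q 0 = x" using xs by (simp add: q_def pos_def \<delta>_def)
  have qc: "q (\<delta> + c) = z"
  proof (cases "c = 0")
    case True then show ?thesis using qd p(1,2) by simp
  next
    case False then show ?thesis using c0 p(2) by (simp add: q_def)
  qed
  have qP: "\<forall>a. 0 \<le> a \<longrightarrow> a \<le> \<delta> + c \<longrightarrow> q a \<in> GP"
  proof (intro allI impI)
    fix a assume a: "0 \<le> a" "a \<le> \<delta> + c"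
    show "q a \<in> GP"
    proof (cases "a \<le> \<delta>")
      case True then show ?thesis using pt_gpos[OF step(1)] posr[OF a(1) True] by (simp add: q_def)
    next
      case False then show ?thesis using p(3) a by (simp add: q_def)
    qed
  qed
  have L1: "\<forall>a b. 0 \<le> a \<longrightarrow> a \<le> \<delta> \<longrightarrow> 0 \<le> b \<longrightarrow> b \<le> \<delta> \<longrightarrow> gd (q a) (q b) \<le> \<bar>a - b\<bar>"
  proof (intro allI impI)
    fix a b assume ab: "0 \<le> a" "a \<le> \<delta>" "0 \<le> b" "b \<le> \<delta>"
    have "gd (q a) (q b) \<le> \<bar>pos a - pos b\<bar>" using gd_pt[OF step(1)] posr ab by (simp add: q_def)
    also have "\<dots> = \<bar>a - b\<bar>" by (auto simp: pos_def)
    finally show "gd (q a) (q b) \<le> \<bar>a - b\<bar>" .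
  qed
  have L2: "\<forall>a b. \<delta> \<le> a \<longrightarrow> a \<le> \<delta> + c \<longrightarrow> \<delta> \<le> b \<longrightarrow> b \<le> \<delta> + c \<longrightarrow> gd (q a) (q b) \<le> \<bar>a - b\<bar>"
  proof (intro allI impI)
    fix a b assume ab: "\<delta> \<le> a" "a \<le> \<delta> + c" "\<delta> \<le> b" "b \<le> \<delta> + c"
    have qq: "q w = p (w - \<delta>)" if "\<delta> \<le> w" for w
    proof (cases "w = \<delta>")
      case True then show ?thesis using qd p(1) by simp
    next
      case False then show ?thesis using that by (simp add: q_def)
    qed
    have qa: "q a = p (a - \<delta>)" "q b = p (b - \<delta>)" using qq ab by auto
    have "gd (p (a - \<delta>)) (p (b - \<delta>)) \<le> \<bar>(a - \<delta>) - (b - \<delta>)\<bar>"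
      using p(4)[rule_format, of "a - \<delta>" "b - \<delta>"] ab by simp
    then show "gd (q a) (q b) \<le> \<bar>a - b\<bar>" unfolding qa by simp
  qed
  have "\<forall>a b. 0 \<le> a \<longrightarrow> a \<le> \<delta> + c \<longrightarrow> 0 \<le> b \<longrightarrow> b \<le> \<delta> + c \<longrightarrow> gd (q a) (q b) \<le> \<bar>a - b\<bar>"
    by (rule glue[OF L1 L2 qP]) (use c0 in \<open>auto simp: \<delta>_def\<close>)
  then show ?case using q0 qc qP unfolding \<delta>_def by blast
qed

end

definition fvx :: "('e \<Rightarrow> 'v \<times> 'v) \<Rightarrow> ('e \<Rightarrow> real) \<Rightarrow> real \<Rightarrow> 'v \<Rightarrow> ('v,'e) gpt \<Rightarrow> real" where
  "fvx ends A m v x = (case x of Vtx u \<Rightarrow> if u = v then 0 else m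
     | EPt e s \<Rightarrow> min m (min (if fst (ends e) = v then s else m) (if snd (ends e) = v then A e - s else m)))"

lemma min_lip: "\<bar>min (a::real) b - min c d\<bar> \<le> max \<bar>a - c\<bar> \<bar>b - d\<bar>"
  unfolding min_def max_def by (auto simp: abs_le_iff)
lemma min_lip2: "\<bar>a - c\<bar> \<le> (e::real) \<Longrightarrow> \<bar>b - d\<bar> \<le> e \<Longrightarrow> \<bar>min a b - min c d\<bar> \<le> e"
  unfolding min_def by (auto simp: abs_le_iff)
lemma g_lip: fixes u w m L :: real
  shows "min m (min (if P then u else m) (if Q then L - u else m)) \<le> min m (min (if P then w else m) (if Q then L - w else m)) + \<bar>u - w\<bar>"
proof -
  have 1: "\<bar>(if P then u else m) - (if P then w else m)\<bar> \<le> \<bar>u - w\<bar>" by simp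
  have 2: "\<bar>(if Q then L - u else m) - (if Q then L - w else m)\<bar> \<le> \<bar>u - w\<bar>" by (simp add: abs_minus_commute)
  have "\<bar>min m (min (if P then u else m) (if Q then L - u else m)) - min m (min (if P then w else m) (if Q then L - w else m))\<bar> \<le> \<bar>u - w\<bar>"
    by (intro min_lip2 1 2) simp
  then show ?thesis by (simp add: abs_le_iff)
qed

lemma pigeon: assumes "finite F" "\<forall>n. f n \<in> F"
  shows "\<exists>c r. strict_mono (r::nat\<Rightarrow>nat) \<and> (\<forall>n. f (r n) = c)"
proof -
  have "finite (f ` UNIV)" using assms by (meson finite_subset image_subsetI)
  then obtain a0 where "infinite {a \<in> UNIV. f a = f a0}" using pigeonhole_infinite[OF infinite_UNIV_nat, of f] by blast
  then obtain r :: "nat \<Rightarrow> nat" where "strict_mono r" "\<forall>n. r n \<in> {a \<in> UNIV. f a = f a0}"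
    using infinite_enumerate by blast
  then show ?thesis by auto
qed

context
  fixes V :: "'v set" and E :: "'e set" and ends :: "'e \<Rightarrow> 'v \<times> 'v"
    and A :: "'e \<Rightarrow> real" and phi :: "'v \<Rightarrow> real"
  assumes wf: "wf_graph V E ends A phi"
begin


lemma fvx_pt: assumes "e \<in> E" "0 \<le> u" "u \<le> A e" "0 < m" "m \<le> A e"
  shows "fvx ends A m v (ptE ends A e u) = min m (min (if fst (ends e) = v then u else m) (if snd (ends e) = v then A e - u else m))"
proof -
  have Ae: "A e > 0" using wfA[OF wf assms(1)] .
  consider "u = 0" | "u = A e" | "0 < u" "u < A e" using assms by linarith
  then show ?thesis
  proof cases
    case 1
    then show ?thesis using Ae assms by (cases "fst (ends e) = v"; cases "snd (ends e) = v") (simp_all add: ptE_def fvx_def min_def)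
  next
    case 2
    then show ?thesis using Ae assms by (cases "fst (ends e) = v"; cases "snd (ends e) = v") (simp_all add: ptE_def fvx_def min_def)
  next
    case 3
    then show ?thesis using Ae by (simp add: ptE_def fvx_def)
  qed
qed

lemma fvx_walk: assumes "0 < m" "\<forall>e\<in>E. m \<le> A e"
  shows "gwalk V E ends A x z c \<Longrightarrow> fvx ends A m v x \<le> fvx ends A m v z + c"
proof (induction rule: gwalk.induct)
  case (refl x) then show ?case by simp
next
  case (step e s x t y z c)
  have xs: "0 \<le> s" "s \<le> A e" "x = ptE ends A e s" using gpos_pt[OF wf step(2,1)] by auto
  have yt: "0 \<le> t" "t \<le> A e" "y = ptE ends A e t" using gpos_pt[OF wf step(3,1)] by auto
  have "fvx ends A m v x \<le> fvx ends A m v y + \<bar>s - t\<bar>"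
    unfolding xs(3) yt(3) fvx_pt[OF step(1) xs(1,2) assms(1) assms(2)[rule_format, OF step(1)]]
      fvx_pt[OF step(1) yt(1,2) assms(1) assms(2)[rule_format, OF step(1)]]
    by (rule g_lip)
  then show ?case using step.IH by linarith
qed

lemma gd_vtx0: assumes "x \<in> (gpoints V E A)" "v \<in> V" "gd V E ends A x (Vtx v) \<le> 0" shows "x = Vtx v"
proof (rule ccontr)
  assume ne: "x \<noteq> Vtx v"
  define m where "m = Min (insert 1 (A ` E))"
  have fin: "finite (insert 1 (A ` E))" using wfV[OF wf] by simp
  have m0: "m > 0" unfolding m_def using fin wfA[OF wf] by (subst Min_gr_iff) auto
  have mA: "\<forall>e\<in>E. m \<le> A e" unfolding m_def using fin by auto
  have vP: "Vtx v \<in> (gpoints V E A)" using assms(2) by (simp add: gpoints_def)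
  have "fvx ends A m v x \<le> gd V E ends A x (Vtx v)"
    unfolding gdist_def using gwalk_ex[OF wf assms(1) vP]
    by (intro cInf_greatest) (auto dest!: fvx_walk[OF m0 mA, of _ _ _ v] simp: fvx_def)
  moreover have "fvx ends A m v x > 0"
    using assms(1) ne m0 by (auto simp: gpoints_def fvx_def split: if_splits)
  ultimately show False using assms(3) by simp
qed

lemma seq_conv: fixes x :: "nat \<Rightarrow> ('v, 'e) gpt" assumes "\<forall>n. x n \<in> (gpoints V E A)"
  shows "\<exists>l r. l \<in> (gpoints V E A) \<and> strict_mono r \<and> (\<lambda>n. gd V E ends A (x (r n)) l) \<longlonglongrightarrow> 0"
proof -
  define key where "key n = (case x n of Vtx v \<Rightarrow> Inl v | EPt e s \<Rightarrow> Inr e)" for n :: nat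
  have "key n \<in> Inl ` V \<union> Inr ` E" for n using assms[rule_format, of n] by (auto simp: key_def gpoints_def)
  then have "\<forall>n. key n \<in> Inl ` V \<union> Inr ` E" by blast
  moreover have "finite (Inl ` V \<union> Inr ` E)" using wfV[OF wf] by simp
  ultimately have "\<exists>c r. strict_mono (r::nat\<Rightarrow>nat) \<and> (\<forall>n. key (r n) = c)" by (intro pigeon)
  then obtain cc and r :: "nat \<Rightarrow> nat" where r: "strict_mono r" "\<forall>n. key (r n) = cc" by blast
  show ?thesis
  proof (cases cc)
    case (Inl v)
    then have xv: "x (r n) = Vtx v" for n using r(2)[rule_format, of n]
      by (cases "x (r n)") (auto simp: key_def)
    have vP: "Vtx v \<in> (gpoints V E A)" using assms xv by metis
    show ?thesis using r(1) gd_refl[OF wf vP] vP by (intro exI[of _ "Vtx v"] exI[of _ r]) (simp add: xv)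
  next
    case (Inr e)
    have "\<exists>s. x (r n) = EPt e s \<and> 0 < s \<and> s < A e \<and> e \<in> E" for n
      using r(2)[rule_format, of n] Inr assms[rule_format, of "r n"]
      by (cases "x (r n)") (auto simp: key_def gpoints_def)
    then have "\<forall>n. \<exists>s. x (r n) = EPt e s \<and> 0 < s \<and> s < A e \<and> e \<in> E" by blast
    then have "\<exists>s. \<forall>n. x (r n) = EPt e (s n) \<and> 0 < s n \<and> s n < A e \<and> e \<in> E" by (rule choice)
    then obtain s where s0: "\<forall>n. x (r n) = EPt e (s n) \<and> 0 < s n \<and> s n < A e \<and> e \<in> E" by blast
    then have s: "\<And>n. x (r n) = EPt e (s n) \<and> 0 < s n \<and> s n < A e" and e: "e \<in> E" by auto
    have "seq_compact {0..A e}" by (simp add: compact_imp_seq_compact)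
    moreover have "\<forall>n. s n \<in> {0..A e}" using s by (simp add: less_imp_le)
    ultimately obtain a r2 where a: "a \<in> {0..A e}" "strict_mono r2" "(s \<circ> r2) \<longlonglongrightarrow> a"
      by (rule seq_compactE)
    define l where "l = ptE ends A e a"
    have lP: "l \<in> (gpoints V E A)" using pt_gpos[OF wf e] a(1) by (simp add: l_def)
    have xe: "x (r n) = ptE ends A e (s n)" for n using s[of n] by (simp add: ptE_def)
    have bnd: "gd V E ends A (x (r (r2 n))) l \<le> \<bar>s (r2 n) - a\<bar>" for n
      unfolding xe l_def using gd_pt[OF wf e] s[of "r2 n"] a(1) by simp
    have nn: "0 \<le> gd V E ends A (x (r (r2 n))) l" for n using gd_nonneg[OF wf assms[rule_format] lP] by simp
    have lim0: "(\<lambda>n. \<bar>s (r2 n) - a\<bar>) \<longlonglongrightarrow> 0"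
      using tendsto_rabs_zero[OF LIM_zero[OF a(3)]] by (simp add: o_def)
    have "(\<lambda>n. gd V E ends A (x (r (r2 n))) l) \<longlonglongrightarrow> 0"
    proof (rule tendsto_sandwich[where f="\<lambda>n. 0" and h="\<lambda>n. \<bar>s (r2 n) - a\<bar>"])
      show "\<forall>\<^sub>F n in sequentially. 0 \<le> gd V E ends A (x (r (r2 n))) l" using nn by (intro always_eventually) auto
      show "\<forall>\<^sub>F n in sequentially. gd V E ends A (x (r (r2 n))) l \<le> \<bar>s (r2 n) - a\<bar>" using bnd by (intro always_eventually) auto
    qed (auto intro: lim0)
    then show ?thesis using lP r(1) a(2) by (intro exI[of _ l] exI[of _ "r \<circ> r2"]) (auto intro: strict_mono_o)
  qed
qed

lemma gd_bounded: "\<exists>B. \<forall>x\<in>(gpoints V E A). \<forall>y\<in>(gpoints V E A). gd V E ends A x y \<le> B"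
proof -
  define M where "M = Max (insert 0 (A ` E))"
  define W where "W = Max ((\<lambda>(u,w). gd V E ends A (Vtx u) (Vtx w)) ` (V \<times> V))"
  have finW: "finite ((\<lambda>(u,w). gd V E ends A (Vtx u) (Vtx w)) ` (V \<times> V))" using wfV[OF wf] by simp
  have "gd V E ends A x y \<le> M + W + M" if xy: "x \<in> (gpoints V E A)" "y \<in> (gpoints V E A)" for x y
  proof -
    obtain u c1 where u: "u \<in> V" "gwalk V E ends A x (Vtx u) c1" "c1 \<le> M" using gwalk_to_vtx[OF wf xy(1)] M_def by blast
    obtain w c2 where w: "w \<in> V" "gwalk V E ends A y (Vtx w) c2" "c2 \<le> M" using gwalk_to_vtx[OF wf xy(2)] M_def by blast
    have uP: "Vtx u \<in> (gpoints V E A)" "Vtx w \<in> (gpoints V E A)" using u w by (auto simp: gpoints_def)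
    have "gd V E ends A x y \<le> gd V E ends A x (Vtx u) + gd V E ends A (Vtx u) y" by (rule gd_tri[OF wf xy(1) uP(1) xy(2)])
    also have "gd V E ends A (Vtx u) y \<le> gd V E ends A (Vtx u) (Vtx w) + gd V E ends A (Vtx w) y" by (rule gd_tri[OF wf uP xy(2)])
    also have "gd V E ends A x (Vtx u) \<le> M" using gd_le[OF wf u(2)] u(3) by simp
    also have "gd V E ends A (Vtx w) y \<le> M" using gd_le[OF wf gwalk_rev[OF wf w(2)]] w(3) by simp
    also have "gd V E ends A (Vtx u) (Vtx w) \<le> W" unfolding W_def using finW u(1) w(1) by (auto intro!: Max_ge)
    finally show ?thesis by simp
  qed
  then show ?thesis by blast
qed

lemma gd_le_diam: assumes "x \<in> (gpoints V E A)" "y \<in> (gpoints V E A)" shows "gd V E ends A x y \<le> gdiam V E ends A"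
proof -
  obtain B where B: "\<forall>x\<in>(gpoints V E A). \<forall>y\<in>(gpoints V E A). gd V E ends A x y \<le> B" using gd_bounded by blast
  show ?thesis unfolding gdiam_def using assms B by (intro cSup_upper) (auto intro!: bdd_aboveI[of _ B])
qed

end

context
  fixes V :: "'v set" and E :: "'e set" and ends :: "'e \<Rightarrow> 'v \<times> 'v"
    and A :: "'e \<Rightarrow> real" and phi :: "'v \<Rightarrow> real" and k :: nat
  assumes wf: "wf_graph V E ends A phi"
begin

lemma lv_basic: fixes str :: "real \<Rightarrow> nat \<Rightarrow> ('v, 'e) gpt" and v :: 'v
  assumes "t \<ge> 0"
  shows "0 \<le> last_visit k str v t \<and> last_visit k str v t \<le> t"
proof -
  define S where "S = {t'. 0 \<le> t' \<and> t' \<le> t \<and> (\<exists>i<k. str t' i = Vtx v)}"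
  show ?thesis
  proof (cases "S = {}")
    case True then show ?thesis using assms by (simp add: last_visit_def S_def[symmetric])
  next
    case False
    then obtain b where b: "b \<in> S" by blast
    have bdd: "bdd_above S" unfolding S_def by (auto intro!: bdd_aboveI[of _ t])
    have "b \<le> Sup S" by (rule cSup_upper[OF b bdd])
    moreover have "Sup S \<le> t" using False by (intro cSup_least) (auto simp: S_def)
    moreover have "0 \<le> b" using b by (simp add: S_def)
    ultimately show ?thesis using False by (simp add: last_visit_def S_def[symmetric])
  qed
qed

lemma lv_ge: fixes str :: "real \<Rightarrow> nat \<Rightarrow> ('v, 'e) gpt" and v :: 'v
  assumes "0 \<le> b" "b \<le> t" "i < k" "str b i = Vtx v"
  shows "b \<le> last_visit k str v t"
proof -
  define S where "S = {t'. 0 \<le> t' \<and> t' \<le> t \<and> (\<exists>i<k. str t' i = Vtx v)}"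
  have bS: "b \<in> S" using assms by (auto simp: S_def)
  have bdd: "bdd_above S" unfolding S_def by (auto intro!: bdd_aboveI[of _ t])
  have "b \<le> Sup S" by (rule cSup_upper[OF bS bdd])
  then show ?thesis using bS by (auto simp: last_visit_def S_def[symmetric])
qed

lemma lv_witness: fixes str :: "real \<Rightarrow> nat \<Rightarrow> ('v, 'e) gpt" and v :: 'v
  assumes "0 \<le> a" "a < last_visit k str v t"
  shows "\<exists>b. a < b \<and> 0 \<le> b \<and> b \<le> t \<and> (\<exists>i<k. str b i = Vtx v)"
proof -
  define S where "S = {t'. 0 \<le> t' \<and> t' \<le> t \<and> (\<exists>i<k. str t' i = Vtx v)}"
  have ne: "S \<noteq> {}" using assms by (auto simp: last_visit_def S_def[symmetric])
  then have "a < Sup S" using assms by (simp add: last_visit_def S_def[symmetric])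
  then obtain b where "b \<in> S" "a < b" using less_cSupD[OF ne] by blast
  then show ?thesis by (auto simp: S_def)
qed

lemma lv_agree: fixes s1 s2 :: "real \<Rightarrow> nat \<Rightarrow> ('v, 'e) gpt" and v :: 'v
  assumes "0 \<le> D" "\<forall>s. D < s \<longrightarrow> s \<le> t \<longrightarrow> (\<forall>i<k. s1 s i = s2 s i)"
  "D < last_visit k s1 v t"
  shows "last_visit k s1 v t = last_visit k s2 v t"
proof (rule antisym)
  show "last_visit k s1 v t \<le> last_visit k s2 v t"
  proof (rule ccontr)
    assume "\<not> ?thesis"
    then have "max D (last_visit k s2 v t) < last_visit k s1 v t" using assms(3) by simp
    have "0 \<le> max D (last_visit k s2 v t)" using assms(1) by simp
    from lv_witness[OF this \<open>max D (last_visit k s2 v t) < last_visit k s1 v t\<close>]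
    obtain b i where b: "max D (last_visit k s2 v t) < b" "0 \<le> b" "b \<le> t" "i < k" "s1 b i = Vtx v"
      by auto
    then have "s2 b i = Vtx v" using assms(2) by auto
    from lv_ge[where str=s2 and v=v and b=b and t=t and i=i, OF b(2,3,4) this] b(1) show False by simp
  qed
next
  show "last_visit k s2 v t \<le> last_visit k s1 v t"
  proof (rule ccontr)
    assume "\<not> ?thesis"
    then have "last_visit k s1 v t < last_visit k s2 v t" by simp
    from lv_witness[OF _ this] assms(1,3) obtain b i where b: "last_visit k s1 v t < b" "0 \<le> b" "b \<le> t" "i < k" "s2 b i = Vtx v"
      by (meson less_trans not_le less_imp_le)
    then have "s1 b i = Vtx v" using assms(2,3) by auto
    from lv_ge[where str=s1 and v=v and b=b and t=t and i=i, OF b(2,3,4) this] b(1) show False by simp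
  qed
qed

lemma wlat_ge: fixes str :: "real \<Rightarrow> nat \<Rightarrow> ('v, 'e) gpt"
  shows "v \<in> V \<Longrightarrow> phi v * idle k str v t \<le> wlat V phi k str t"
  unfolding wlat_def using wfV[OF wf] by (intro Max_ge) auto

lemma wlat_ex: fixes str :: "real \<Rightarrow> nat \<Rightarrow> ('v, 'e) gpt"
  shows "\<exists>v\<in>V. wlat V phi k str t = phi v * idle k str v t"
proof -
  have "wlat V phi k str t \<in> (\<lambda>v. phi v * idle k str v t) ` V"
    unfolding wlat_def using wfV[OF wf] by (intro Max_in) auto
  then show ?thesis by auto
qed

lemma wlat_mono: fixes s1 s2 :: "real \<Rightarrow> nat \<Rightarrow> ('v, 'e) gpt"
  assumes "\<forall>v\<in>V. idle k s1 v t1 \<le> idle k s2 v t2"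
  shows "wlat V phi k s1 t1 \<le> wlat V phi k s2 t2"
proof -
  obtain v where v: "v \<in> V" "wlat V phi k s1 t1 = phi v * idle k s1 v t1" using wlat_ex by blast
  have "phi v * idle k s1 v t1 \<le> phi v * idle k s2 v t2"
    using assms v(1) wfphi[OF wf v(1)] by (intro mult_left_mono) auto
  also have "\<dots> \<le> wlat V phi k s2 t2" by (rule wlat_ge[OF v(1)])
  finally show ?thesis using v(2) by simp
qed

lemma wlat_nonneg: fixes str :: "real \<Rightarrow> nat \<Rightarrow> ('v, 'e) gpt"
  assumes "t \<ge> 0" shows "0 \<le> wlat V phi k str t"
proof -
  obtain v where v: "v \<in> V" "wlat V phi k str t = phi v * idle k str v t" using wlat_ex by blast
  have "0 \<le> idle k str v t" using lv_basic[OF assms] by (simp add: idle_def)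
  then show ?thesis using v wfphi[OF wf v(1)] by simp
qed

lemma shift_strat: assumes "str \<in> strategies V E ends A k" "r \<ge> 0"
  shows "(\<lambda>t. str (t + r)) \<in> strategies V E ends A k"
  using assms unfolding strategies_def
  by (auto) (metis add_diff_cancel_right add_nonneg_nonneg diff_add_eq_diff_diff_swap)

lemma shift_idle: fixes str :: "real \<Rightarrow> nat \<Rightarrow> ('v, 'e) gpt" and v :: 'v
  assumes "t \<ge> 0" "r \<ge> 0"
  shows "idle k (\<lambda>t. str (t + r)) v t \<le> idle k str v (t + r)"
proof -
  let ?s = "\<lambda>t. str (t + r)"
  have "last_visit k str v (t + r) \<le> last_visit k ?s v t + r"
  proof (rule ccontr)
    assume "\<not> ?thesis"
    then have lt: "last_visit k ?s v t + r < last_visit k str v (t + r)" by simp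
    have lv0: "0 \<le> last_visit k ?s v t" using lv_basic[OF assms(1)] by simp
    then obtain b i where b: "last_visit k ?s v t + r < b" "0 \<le> b" "b \<le> t + r" "i < k" "str b i = Vtx v"
      using lv_witness[OF _ lt] assms(2) by auto
    have "b - r \<le> last_visit k ?s v t"
      by (rule lv_ge[where i=i]) (use b assms lv0 in auto)
    then show False using b(1) by simp
  qed
  then show ?thesis by (simp add: idle_def)
qed

lemma cost_fin: "cost V phi k (ereal r) str = (SUP t\<in>{r..}. ereal (wlat V phi k str t))"
  by (simp add: cost_def)

lemma cost_zero: "cost V phi k 0 str = (SUP t\<in>{0..}. ereal (wlat V phi k str t))"
  by (simp add: cost_def zero_ereal_def)

lemma cost_anti: "r \<le> r' \<Longrightarrow> cost V phi k (ereal r') str \<le> cost V phi k (ereal r) str"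
  unfolding cost_fin by (intro SUP_subset_mono) auto

lemma cost_inf_le: "cost V phi k \<infinity> str \<le> cost V phi k (ereal r) str"
proof -
  have "cost V phi k \<infinity> str = Limsup at_top (\<lambda>t. ereal (wlat V phi k str t))" by (simp add: cost_def)
  also have "\<dots> \<le> (SUP t\<in>{t. r \<le> t}. ereal (wlat V phi k str t))"
    unfolding Limsup_def by (rule INF_lower2[of "\<lambda>t. r \<le> t"]) auto
  finally show ?thesis by (simp add: cost_fin atLeast_def)
qed

lemma opt_fin: assumes "r \<ge> 0"
  shows "opt_cost V E ends A phi k (ereal r) = opt_cost V E ends A phi k 0"
proof (rule antisym)
  show "opt_cost V E ends A phi k (ereal r) \<le> opt_cost V E ends A phi k 0"
    unfolding opt_cost_def zero_ereal_def using assms by (intro INF_mono) (auto intro: cost_anti)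
next
  show "opt_cost V E ends A phi k 0 \<le> opt_cost V E ends A phi k (ereal r)"
    unfolding opt_cost_def
  proof (intro INF_greatest)
    fix str assume s: "str \<in> strategies V E ends A k"
    let ?s = "\<lambda>t. str (t + r)"
    have "(INF str\<in>strategies V E ends A k. cost V phi k 0 str) \<le> cost V phi k 0 ?s"
      by (rule INF_lower[OF shift_strat[OF s assms]])
    also have "\<dots> \<le> cost V phi k (ereal r) str"
      unfolding cost_zero cost_fin
    proof (intro SUP_least)
      fix t :: real assume t: "t \<in> {0..}"
      have "wlat V phi k ?s t \<le> wlat V phi k str (t + r)"
        using shift_idle[of t r str] t assms by (intro wlat_mono) auto
      also have "ereal (wlat V phi k str (t + r)) \<le> (SUP t\<in>{r..}. ereal (wlat V phi k str t))"
        using t by (intro SUP_upper) auto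
      finally show "ereal (wlat V phi k ?s t) \<le> (SUP t\<in>{r..}. ereal (wlat V phi k str t))" by simp
    qed
    finally show "(INF str\<in>strategies V E ends A k. cost V phi k 0 str) \<le> cost V phi k (ereal r) str" .
  qed
qed

lemma opt_inf: "opt_cost V E ends A phi k \<infinity> = opt_cost V E ends A phi k 0"
proof (rule antisym)
  show "opt_cost V E ends A phi k \<infinity> \<le> opt_cost V E ends A phi k 0"
    unfolding opt_cost_def zero_ereal_def by (intro INF_mono) (auto intro: cost_inf_le)
next
  show "opt_cost V E ends A phi k 0 \<le> opt_cost V E ends A phi k \<infinity>"
    unfolding opt_cost_def
  proof (intro INF_greatest)
    fix str assume s: "str \<in> strategies V E ends A k"
    have "cost V phi k \<infinity> str = Limsup at_top (\<lambda>t. ereal (wlat V phi k str t))" by (simp add: cost_def)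
    also have "(INF str\<in>strategies V E ends A k. cost V phi k 0 str) \<le> \<dots>"
      unfolding Limsup_def
    proof (intro INF_greatest, clarsimp)
      fix P assume "eventually P (at_top :: real filter)"
      then obtain N where N: "\<forall>n\<ge>N. P n" by (auto simp: eventually_at_top_linorder)
      define N' where "N' = max N 0"
      have "(INF str\<in>strategies V E ends A k. cost V phi k 0 str) = opt_cost V E ends A phi k (ereal N')"
        using opt_fin[of N'] by (simp add: N'_def opt_cost_def)
      also have "\<dots> \<le> cost V phi k (ereal N') str" unfolding opt_cost_def by (rule INF_lower[OF s])
      also have "\<dots> \<le> (SUP x\<in>Collect P. ereal (wlat V phi k str x))"
        unfolding cost_fin using N by (intro SUP_subset_mono) (auto simp: N'_def)
      finally show "(INF str\<in>strategies V E ends A k. cost V phi k 0 str) \<le> (SUP x\<in>Collect P. ereal (wlat V phi k str x))" .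
    qed
    finally show "(INF str\<in>strategies V E ends A k. cost V phi k 0 str) \<le> cost V phi k \<infinity> str" by simp
  qed
qed

end

context
  fixes V :: "'v set" and E :: "'e set" and ends :: "'e \<Rightarrow> 'v \<times> 'v"
    and A :: "'e \<Rightarrow> real" and phi :: "'v \<Rightarrow> real" and k :: nat
  assumes wf: "wf_graph V E ends A phi"
begin

lemma strat_lip: fixes str :: "real \<Rightarrow> nat \<Rightarrow> ('v, 'e) gpt"
  assumes "str \<in> strategies V E ends A k" "0 \<le> a" "0 \<le> b" "i < k"
  shows "gdist V E ends A (str a i) (str b i) \<le> \<bar>a - b\<bar>"
  using assms unfolding strategies_def by auto

lemma strat_pt: fixes str :: "real \<Rightarrow> nat \<Rightarrow> ('v, 'e) gpt"
  assumes "str \<in> strategies V E ends A k" "0 \<le> a" "i < k"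
  shows "str a i \<in> gpoints V E A"
  using assms unfolding strategies_def by auto

lemma lsc:
  fixes \<pi> :: "nat \<Rightarrow> real \<Rightarrow> nat \<Rightarrow> ('v, 'e) gpt" and \<pi>s :: "real \<Rightarrow> nat \<Rightarrow> ('v, 'e) gpt"
  assumes \<pi>P: "\<forall>n. \<pi> n \<in> strategies V E ends A k"
    and wl: "\<forall>n t. 0 \<le> t \<longrightarrow> wlat V phi k (\<pi> n) t < j + 1 / (real n + 1)"
    and r: "strict_mono r"
    and lim: "\<forall>t\<ge>0. \<forall>i<k. \<pi>s t i \<in> gpoints V E A \<and> (\<lambda>m. gdist V E ends A (\<pi> (r m) t i) (\<pi>s t i)) \<longlonglongrightarrow> 0"
    and t: "0 \<le> t" and v: "v \<in> V"
  shows "phi v * idle k \<pi>s v t \<le> j"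
proof (rule ccontr)
  assume neg: "\<not> ?thesis"
  define L where "L = last_visit k \<pi>s v t"
  have L0: "0 \<le> L" "L \<le> t" using lv_basic[OF wf t] by (auto simp: L_def)
  have pv: "phi v > 0" using wfphi[OF wf v] .
  have gt: "j < phi v * (t - L)" using neg by (simp add: idle_def L_def)
  then have gt': "j / phi v < t - L" using pv by (simp add: pos_divide_less_eq mult.commute)
  define \<eta> where "\<eta> = (t - L - j / phi v) / 2"
  have \<eta>: "\<eta> > 0" using gt' by (simp add: \<eta>_def)
  have "0 < phi v * \<eta>" using pv \<eta> by simp
  then obtain N :: nat where N0: "N > 0" "inverse (real N) < phi v * \<eta>" using ex_inverse_of_nat_less by blast
  have "1 / (real N + 1) \<le> inverse (real N)" using N0(1) by (simp add: inverse_eq_divide frac_le)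
  then have N: "1 / (real N + 1) < phi v * \<eta>" using N0(2) by simp
  have big: "L + \<eta> < last_visit k (\<pi> (r m)) v t" if m: "N \<le> m" for m
  proof -
    have "m \<le> r m" using seq_suble[OF r] by simp
    then have "real N + 1 \<le> real (r m) + 1" using m by simp
    then have inv: "1 / (real (r m) + 1) \<le> 1 / (real N + 1)" by (intro divide_left_mono) auto
    have "phi v * idle k (\<pi> (r m)) v t \<le> wlat V phi k (\<pi> (r m)) t" by (rule wlat_ge[OF wf v])
    also have "\<dots> < j + 1 / (real (r m) + 1)" using wl t by blast
    also have "\<dots> \<le> j + 1 / (real N + 1)" using inv by simp
    also have "\<dots> < j + phi v * \<eta>" using N by simp
    finally have "phi v * idle k (\<pi> (r m)) v t < j + phi v * \<eta>" .
    then have "idle k (\<pi> (r m)) v t < j / phi v + \<eta>" using pv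
      by (simp add: field_simps)
    then have "t - last_visit k (\<pi> (r m)) v t < j / phi v + \<eta>" by (simp add: idle_def)
    moreover have "L + \<eta> = t - (j / phi v + \<eta>)" by (simp add: \<eta>_def field_simps)
    ultimately show ?thesis by linarith
  qed
  have wit: "\<exists>p. L + \<eta> < fst p \<and> fst p \<le> t \<and> snd p < k \<and> \<pi> (r (m + N)) (fst p) (snd p) = Vtx v" for m
  proof -
    have "0 \<le> L + \<eta>" using L0 \<eta> by simp
    from lv_witness[OF wf this big[of "m + N"]] show ?thesis by auto
  qed
  then have "\<forall>m. \<exists>p. L + \<eta> < fst p \<and> fst p \<le> t \<and> snd p < k \<and> \<pi> (r (m + N)) (fst p) (snd p) = Vtx v" by blast
  then have "\<exists>p. \<forall>m. L + \<eta> < fst (p m) \<and> fst (p m) \<le> t \<and> snd (p m) < k \<and> \<pi> (r (m + N)) (fst (p m)) (snd (p m)) = Vtx v"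
    by (rule choice)
  then obtain p where p: "\<forall>m. L + \<eta> < fst (p m) \<and> fst (p m) \<le> t \<and> snd (p m) < k \<and> \<pi> (r (m + N)) (fst (p m)) (snd (p m)) = Vtx v"
    by blast
  define bb where "bb m = fst (p m)" for m
  define ii where "ii m = snd (p m)" for m
  have bi: "L + \<eta> < bb m" "bb m \<le> t" "ii m < k" "\<pi> (r (m + N)) (bb m) (ii m) = Vtx v" for m
    using p by (auto simp: bb_def ii_def)
  have "\<exists>c r1. strict_mono (r1::nat\<Rightarrow>nat) \<and> (\<forall>n. ii (r1 n) = c)" using bi(3) by (intro pigeon[of "{..<k}"]) auto
  then obtain i0 and r1 :: "nat \<Rightarrow> nat" where r1: "strict_mono r1" "\<forall>n. ii (r1 n) = i0" by blast
  have i0: "i0 < k" using bi(3)[of "r1 0"] r1(2) by simp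
  have "seq_compact {L + \<eta>..t}" by (simp add: compact_imp_seq_compact)
  moreover have "\<forall>n. (bb \<circ> r1) n \<in> {L + \<eta>..t}" using bi(1,2) by (simp add: less_imp_le)
  ultimately obtain b0 and r2 :: "nat \<Rightarrow> nat" where b0: "b0 \<in> {L + \<eta>..t}" "strict_mono r2" "(bb \<circ> r1 \<circ> r2) \<longlonglongrightarrow> b0"
    by (rule seq_compactE)
  define \<rho> where "\<rho> m = r1 (r2 m) + N" for m
  have "strict_mono (r1 \<circ> r2)" by (rule strict_mono_o[OF r1(1) b0(2)])
  then have \<rho>: "strict_mono \<rho>" unfolding \<rho>_def strict_mono_def o_def by simp
  have vis: "\<pi> (r (\<rho> m)) (bb (r1 (r2 m))) i0 = Vtx v" for m
    using bi(4)[of "r1 (r2 m)"] r1(2) by (simp add: \<rho>_def)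
  have b00: "0 \<le> b0" "b0 \<le> t" using b0(1) L0 \<eta> by auto
  have lb0: "\<pi>s b0 i0 \<in> gpoints V E A" "(\<lambda>m. gdist V E ends A (\<pi> (r m) b0 i0) (\<pi>s b0 i0)) \<longlonglongrightarrow> 0"
    using lim b00 i0 by auto
  have bbpos: "0 \<le> bb m" for m using bi(1)[of m] L0 \<eta> by simp
  have "gdist V E ends A (\<pi>s b0 i0) (Vtx v) \<le> 0"
  proof (rule LIMSEQ_le_const)
    show "(\<lambda>m. gdist V E ends A (\<pi> (r (\<rho> m)) b0 i0) (\<pi>s b0 i0) + \<bar>bb (r1 (r2 m)) - b0\<bar>) \<longlonglongrightarrow> 0"
    proof -
      have 1: "(\<lambda>m. gdist V E ends A (\<pi> (r (\<rho> m)) b0 i0) (\<pi>s b0 i0)) \<longlonglongrightarrow> 0"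
        using LIMSEQ_subseq_LIMSEQ[OF lb0(2) \<rho>] by (simp add: o_def)
      have 2: "(\<lambda>m. \<bar>bb (r1 (r2 m)) - b0\<bar>) \<longlonglongrightarrow> 0"
        using tendsto_rabs_zero[OF LIM_zero[OF b0(3)]] by (simp add: o_def)
      show ?thesis using tendsto_add[OF 1 2] by simp
    qed
    show "\<exists>N. \<forall>m\<ge>N. gdist V E ends A (\<pi>s b0 i0) (Vtx v) \<le> gdist V E ends A (\<pi> (r (\<rho> m)) b0 i0) (\<pi>s b0 i0) + \<bar>bb (r1 (r2 m)) - b0\<bar>"
    proof (intro exI allI impI)
      fix m :: nat
      have p1: "\<pi> (r (\<rho> m)) b0 i0 \<in> gpoints V E A" by (rule strat_pt[OF \<pi>P[rule_format] b00(1) i0])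
      have p2: "\<pi> (r (\<rho> m)) (bb (r1 (r2 m))) i0 \<in> gpoints V E A" by (rule strat_pt[OF \<pi>P[rule_format] bbpos i0])
      have "gdist V E ends A (\<pi>s b0 i0) (Vtx v) \<le> gdist V E ends A (\<pi>s b0 i0) (\<pi> (r (\<rho> m)) b0 i0) + gdist V E ends A (\<pi> (r (\<rho> m)) b0 i0) (\<pi> (r (\<rho> m)) (bb (r1 (r2 m))) i0)"
        using gd_tri[OF wf lb0(1) p1 p2] vis[of m] by simp
      also have "gdist V E ends A (\<pi>s b0 i0) (\<pi> (r (\<rho> m)) b0 i0) = gdist V E ends A (\<pi> (r (\<rho> m)) b0 i0) (\<pi>s b0 i0)"
        by (rule gd_sym[OF wf lb0(1) p1])
      also have "gdist V E ends A (\<pi> (r (\<rho> m)) b0 i0) (\<pi> (r (\<rho> m)) (bb (r1 (r2 m))) i0) \<le> \<bar>bb (r1 (r2 m)) - b0\<bar>"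
        using strat_lip[OF \<pi>P[rule_format] b00(1) bbpos i0] by (simp add: abs_minus_commute)
      finally show "gdist V E ends A (\<pi>s b0 i0) (Vtx v) \<le> gdist V E ends A (\<pi> (r (\<rho> m)) b0 i0) (\<pi>s b0 i0) + \<bar>bb (r1 (r2 m)) - b0\<bar>"
        by simp
    qed
  qed
  then have "\<pi>s b0 i0 = Vtx v" by (rule gd_vtx0[OF wf lb0(1) v])
  then have "b0 \<le> L" unfolding L_def by (intro lv_ge[OF wf b00 i0])
  then show False using b0(1) \<eta> by simp
qed

end

context
  fixes V :: "'v set" and E :: "'e set" and ends :: "'e \<Rightarrow> 'v \<times> 'v"
    and A :: "'e \<Rightarrow> real" and phi :: "'v \<Rightarrow> real" and k :: nat
  assumes wf: "wf_graph V E ends A phi"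
begin

lemma diag_rat:
  fixes \<pi> :: "nat \<Rightarrow> real \<Rightarrow> nat \<Rightarrow> ('v, 'e) gpt"
  assumes \<pi>P: "\<forall>n. \<pi> n \<in> strategies V E ends A k"
  shows "\<exists>r. strict_mono r \<and> (\<forall>q i. 0 \<le> q \<longrightarrow> i < k \<longrightarrow>
     (\<exists>l\<in>gpoints V E A. (\<lambda>m. gdist V E ends A (\<pi> (r m) (of_rat q) i) l) \<longlonglongrightarrow> 0))"
proof -
  define PP where "PP n s = (case (from_nat n :: rat \<times> nat) of (q, i) \<Rightarrow> (0 \<le> q \<and> i < k \<longrightarrow>
      (\<exists>l\<in>gpoints V E A. (\<lambda>m. gdist V E ends A (\<pi> (s m) (of_rat q) i) l) \<longlonglongrightarrow> 0)))"
    for n and s :: "nat \<Rightarrow> nat"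
  interpret D: subseqs PP
  proof
    fix n and s :: "nat \<Rightarrow> nat" assume s: "strict_mono s"
    obtain q i where qi: "(from_nat n :: rat \<times> nat) = (q, i)" by (cases "from_nat n :: rat \<times> nat") auto
    show "\<exists>r'. strict_mono r' \<and> PP n (s \<circ> r')"
    proof (cases "0 \<le> q \<and> i < k")
      case True
      have "\<forall>m. \<pi> (s m) (of_rat q) i \<in> gpoints V E A"
        using strat_pt[OF wf \<pi>P[rule_format]] True by simp
      from seq_conv[OF wf this] obtain l r' where "l \<in> gpoints V E A" "strict_mono r'"
        "(\<lambda>m. gdist V E ends A (\<pi> (s (r' m)) (of_rat q) i) l) \<longlonglongrightarrow> 0" by blast
      then show ?thesis by (intro exI[of _ r']) (auto simp: PP_def qi o_def)
    next
      case False then show ?thesis by (intro exI[of _ id]) (auto simp: PP_def qi strict_mono_id)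
    qed
  qed
  have stable: "PP n (s \<circ> r)" if sm: "strict_mono r" "PP n s" for r s n
  proof -
    obtain q i where qi: "(from_nat n :: rat \<times> nat) = (q, i)" by (cases "from_nat n :: rat \<times> nat") auto
    show ?thesis
    proof (cases "0 \<le> q \<and> i < k")
      case True
      then obtain l where l: "l \<in> gpoints V E A" "(\<lambda>m. gdist V E ends A (\<pi> (s m) (of_rat q) i) l) \<longlonglongrightarrow> 0"
        using sm(2) by (auto simp: PP_def qi)
      from LIMSEQ_subseq_LIMSEQ[OF l(2) sm(1)] l(1) show ?thesis by (auto simp: PP_def qi o_def)
    next
      case False then show ?thesis by (auto simp: PP_def qi)
    qed
  qed
  have "\<forall>q i. 0 \<le> q \<longrightarrow> i < k \<longrightarrow>
     (\<exists>l\<in>gpoints V E A. (\<lambda>m. gdist V E ends A (\<pi> (D.diagseq m) (of_rat q) i) l) \<longlonglongrightarrow> 0)"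
  proof (intro allI impI)
    fix q :: rat and i :: nat assume qi: "0 \<le> q" "i < k"
    define n where "n = to_nat (q, i)"
    have "PP n (D.diagseq \<circ> (+) (Suc n))" by (rule D.diagseq_holds) (rule stable)
    then obtain l where l: "l \<in> gpoints V E A"
      "(\<lambda>m. gdist V E ends A (\<pi> (D.diagseq (Suc n + m)) (of_rat q) i) l) \<longlonglongrightarrow> 0"
      using qi by (auto simp: PP_def n_def o_def)
    then have "(\<lambda>m. gdist V E ends A (\<pi> (D.diagseq (m + Suc n)) (of_rat q) i) l) \<longlonglongrightarrow> 0"
      by (simp add: add.commute)
    from LIMSEQ_offset[OF this] l(1)
    show "\<exists>l\<in>gpoints V E A. (\<lambda>m. gdist V E ends A (\<pi> (D.diagseq m) (of_rat q) i) l) \<longlonglongrightarrow> 0" by blast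
  qed
  then show ?thesis using D.subseq_diagseq by blast
qed

end

context
  fixes V :: "'v set" and E :: "'e set" and ends :: "'e \<Rightarrow> 'v \<times> 'v"
    and A :: "'e \<Rightarrow> real" and phi :: "'v \<Rightarrow> real" and k :: nat
  assumes wf: "wf_graph V E ends A phi"
begin

lemma conv_all:
  fixes \<pi> :: "nat \<Rightarrow> real \<Rightarrow> nat \<Rightarrow> ('v, 'e) gpt"
  assumes \<pi>P: "\<forall>n. \<pi> n \<in> strategies V E ends A k"
    and rq: "\<forall>q i. 0 \<le> q \<longrightarrow> i < k \<longrightarrow>
     (\<exists>l\<in>gpoints V E A. (\<lambda>m. gdist V E ends A (\<pi> (r m) (of_rat q) i) l) \<longlonglongrightarrow> 0)"
    and t: "0 \<le> t" and i: "i < k"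
  shows "\<exists>l\<in>gpoints V E A. (\<lambda>m. gdist V E ends A (\<pi> (r m) t i) l) \<longlonglongrightarrow> 0"
proof -
  have pts: "\<forall>m. \<pi> (r m) t i \<in> gpoints V E A" using strat_pt[OF wf \<pi>P[rule_format] t i] by blast
  obtain l r' where l: "l \<in> gpoints V E A" "strict_mono r'" "(\<lambda>m. gdist V E ends A (\<pi> (r (r' m)) t i) l) \<longlonglongrightarrow> 0"
    using seq_conv[OF wf pts] by auto
  have "(\<lambda>m. gdist V E ends A (\<pi> (r m) t i) l) \<longlonglongrightarrow> 0"
  proof (rule LIMSEQ_I)
    fix \<epsilon> :: real assume \<epsilon>: "0 < \<epsilon>"
    obtain x where x: "x \<in> \<rat>" "t < x" "x < t + \<epsilon> / 4" using Rats_dense_in_real[of t "t + \<epsilon> / 4"] \<epsilon> by auto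
    then obtain q where q: "x = of_rat q" by (auto elim: Rats_cases)
    have q0: "0 \<le> q" using x(2) t q by (metis of_rat_less_eq of_rat_0 less_le_trans less_imp_le not_le)
    obtain lq where lq: "lq \<in> gpoints V E A" "(\<lambda>m. gdist V E ends A (\<pi> (r m) x i) lq) \<longlonglongrightarrow> 0"
      using rq q0 i q by blast
    have x0: "0 \<le> x" using x t by simp
    have ptx: "\<pi> n x i \<in> gpoints V E A" for n by (rule strat_pt[OF wf \<pi>P[rule_format] x0 i])
    have ptt: "\<pi> n t i \<in> gpoints V E A" for n by (rule strat_pt[OF wf \<pi>P[rule_format] t i])
    have lip: "gdist V E ends A (\<pi> n t i) (\<pi> n x i) \<le> x - t" for n
      using strat_lip[OF wf \<pi>P[rule_format] t x0 i] x by simp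
    have lip': "gdist V E ends A (\<pi> n x i) (\<pi> n t i) \<le> x - t" for n
      using lip[of n] gd_sym[OF wf ptt ptx] by simp
    have c1: "gdist V E ends A lq l \<le> x - t"
    proof (rule LIMSEQ_le_const)
      have a: "(\<lambda>m. gdist V E ends A (\<pi> (r (r' m)) x i) lq) \<longlonglongrightarrow> 0"
        using LIMSEQ_subseq_LIMSEQ[OF lq(2) l(2)] by (simp add: o_def)
      show "(\<lambda>m. gdist V E ends A (\<pi> (r (r' m)) x i) lq + (x - t) + gdist V E ends A (\<pi> (r (r' m)) t i) l) \<longlonglongrightarrow> x - t"
        using tendsto_add[OF tendsto_add[OF a tendsto_const[of "x - t"]] l(3)] by simp
      show "\<exists>N. \<forall>m\<ge>N. gdist V E ends A lq l \<le> gdist V E ends A (\<pi> (r (r' m)) x i) lq + (x - t) + gdist V E ends A (\<pi> (r (r' m)) t i) l"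
      proof (intro exI allI impI)
        fix m :: nat
        let ?a = "\<pi> (r (r' m)) x i" and ?b = "\<pi> (r (r' m)) t i"
        have "gdist V E ends A lq l \<le> gdist V E ends A lq ?a + gdist V E ends A ?a l" by (rule gd_tri[OF wf lq(1) ptx l(1)])
        also have "gdist V E ends A ?a l \<le> gdist V E ends A ?a ?b + gdist V E ends A ?b l" by (rule gd_tri[OF wf ptx ptt l(1)])
        also have "gdist V E ends A lq ?a = gdist V E ends A ?a lq" by (rule gd_sym[OF wf lq(1) ptx])
        also have "gdist V E ends A ?a ?b \<le> x - t" by (rule lip')
        finally show "gdist V E ends A lq l \<le> gdist V E ends A ?a lq + (x - t) + gdist V E ends A ?b l" by simp
      qed
    qed
    have "eventually (\<lambda>m. gdist V E ends A (\<pi> (r m) x i) lq < \<epsilon> / 4) sequentially"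
      using order_tendstoD(2)[OF lq(2), of "\<epsilon> / 4"] \<epsilon> by linarith
    then obtain N where N: "\<forall>m\<ge>N. gdist V E ends A (\<pi> (r m) x i) lq < \<epsilon> / 4" by (auto simp: eventually_sequentially)
    show "\<exists>no. \<forall>m\<ge>no. norm (gdist V E ends A (\<pi> (r m) t i) l - 0) < \<epsilon>"
    proof (intro exI allI impI)
      fix m assume m: "N \<le> m"
      let ?a = "\<pi> (r m) x i" and ?b = "\<pi> (r m) t i"
      have "gdist V E ends A ?b l \<le> gdist V E ends A ?b ?a + gdist V E ends A ?a l" by (rule gd_tri[OF wf ptt ptx l(1)])
      also have "gdist V E ends A ?a l \<le> gdist V E ends A ?a lq + gdist V E ends A lq l" by (rule gd_tri[OF wf ptx lq(1) l(1)])
      finally have "gdist V E ends A ?b l \<le> gdist V E ends A ?b ?a + (gdist V E ends A ?a lq + gdist V E ends A lq l)" by simp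
      moreover have "gdist V E ends A ?a lq < \<epsilon> / 4" using N m by blast
      ultimately have "gdist V E ends A ?b l \<le> (x - t) + \<epsilon> / 4 + (x - t)" using lip[of "r m"] c1 by linarith
      moreover have "0 \<le> gdist V E ends A ?b l" by (rule gd_nonneg[OF wf ptt l(1)])
      ultimately show "norm (gdist V E ends A ?b l - 0) < \<epsilon>" using x by simp
    qed
  qed
  then show ?thesis using l(1) by blast
qed

end

context
  fixes V :: "'v set" and E :: "'e set" and ends :: "'e \<Rightarrow> 'v \<times> 'v"
    and A :: "'e \<Rightarrow> real" and phi :: "'v \<Rightarrow> real" and k :: nat
  assumes wf: "wf_graph V E ends A phi"
begin

lemma exists_opt:
  assumes J: "opt_cost V E ends A phi k 0 = ereal j"
  shows "\<exists>str\<in>strategies V E ends A k. cost V phi k 0 str = ereal j"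
proof -
  have ex: "\<forall>n::nat. \<exists>s. s \<in> strategies V E ends A k \<and> cost V phi k 0 s < ereal (j + 1 / (real n + 1))"
  proof
    fix n :: nat
    have "opt_cost V E ends A phi k 0 < ereal (j + 1 / (real n + 1))" using J by simp
    then show "\<exists>s. s \<in> strategies V E ends A k \<and> cost V phi k 0 s < ereal (j + 1 / (real n + 1))"
      unfolding opt_cost_def by (auto simp: INF_less_iff)
  qed
  obtain \<pi> :: "nat \<Rightarrow> real \<Rightarrow> nat \<Rightarrow> ('v, 'e) gpt" where \<pi>: "\<forall>n. \<pi> n \<in> strategies V E ends A k \<and> cost V phi k 0 (\<pi> n) < ereal (j + 1 / (real n + 1))"
    using choice[OF ex] by blast
  have \<pi>P: "\<forall>n. \<pi> n \<in> strategies V E ends A k" using \<pi> by blast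
  have wl: "\<forall>n t. 0 \<le> t \<longrightarrow> wlat V phi k (\<pi> n) t < j + 1 / (real n + 1)"
  proof (intro allI impI)
    fix n :: nat and t :: real assume t: "0 \<le> t"
    have "ereal (wlat V phi k (\<pi> n) t) \<le> cost V phi k 0 (\<pi> n)"
      unfolding cost_zero[OF wf] using t by (intro SUP_upper) auto
    also have "\<dots> < ereal (j + 1 / (real n + 1))" using \<pi> by blast
    finally show "wlat V phi k (\<pi> n) t < j + 1 / (real n + 1)" by simp
  qed
  obtain r where r: "strict_mono r" "\<forall>q i. 0 \<le> q \<longrightarrow> i < k \<longrightarrow>
     (\<exists>l\<in>gpoints V E A. (\<lambda>m. gdist V E ends A (\<pi> (r m) (of_rat q) i) l) \<longlonglongrightarrow> 0)"
    using diag_rat[OF wf \<pi>P] by blast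
  define \<pi>s where "\<pi>s t i = (SOME l. l \<in> gpoints V E A \<and> (\<lambda>m. gdist V E ends A (\<pi> (r m) t i) l) \<longlonglongrightarrow> 0)" for t i
  have lim: "\<forall>t\<ge>0. \<forall>i<k. \<pi>s t i \<in> gpoints V E A \<and> (\<lambda>m. gdist V E ends A (\<pi> (r m) t i) (\<pi>s t i)) \<longlonglongrightarrow> 0"
  proof (intro allI impI)
    fix t :: real and i :: nat assume t: "0 \<le> t" and i: "i < k"
    have "\<exists>l. l \<in> gpoints V E A \<and> (\<lambda>m. gdist V E ends A (\<pi> (r m) t i) l) \<longlonglongrightarrow> 0"
      using conv_all[OF wf \<pi>P r(2) t i] by blast
    then show "\<pi>s t i \<in> gpoints V E A \<and> (\<lambda>m. gdist V E ends A (\<pi> (r m) t i) (\<pi>s t i)) \<longlonglongrightarrow> 0"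
      unfolding \<pi>s_def by (rule someI_ex)
  qed
  have sP: "\<pi>s \<in> strategies V E ends A k"
    unfolding strategies_def
  proof (intro CollectI conjI allI impI)
    fix t :: real and i :: nat assume "0 \<le> t" "i < k"
    then show "\<pi>s t i \<in> gpoints V E A" using lim by blast
  next
    fix a b :: real and i :: nat assume a: "0 \<le> a" and b: "0 \<le> b" and i: "i < k"
    have la: "\<pi>s a i \<in> gpoints V E A" "(\<lambda>m. gdist V E ends A (\<pi> (r m) a i) (\<pi>s a i)) \<longlonglongrightarrow> 0" using lim a i by auto
    have lb: "\<pi>s b i \<in> gpoints V E A" "(\<lambda>m. gdist V E ends A (\<pi> (r m) b i) (\<pi>s b i)) \<longlonglongrightarrow> 0" using lim b i by auto
    show "gdist V E ends A (\<pi>s a i) (\<pi>s b i) \<le> \<bar>a - b\<bar>"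
    proof (rule LIMSEQ_le_const)
      show "(\<lambda>m. gdist V E ends A (\<pi> (r m) a i) (\<pi>s a i) + \<bar>a - b\<bar> + gdist V E ends A (\<pi> (r m) b i) (\<pi>s b i)) \<longlonglongrightarrow> \<bar>a - b\<bar>"
        using tendsto_add[OF tendsto_add[OF la(2) tendsto_const[of "\<bar>a - b\<bar>"]] lb(2)] by simp
      show "\<exists>N. \<forall>m\<ge>N. gdist V E ends A (\<pi>s a i) (\<pi>s b i) \<le> gdist V E ends A (\<pi> (r m) a i) (\<pi>s a i) + \<bar>a - b\<bar> + gdist V E ends A (\<pi> (r m) b i) (\<pi>s b i)"
      proof (intro exI allI impI)
        fix m :: nat
        let ?a = "\<pi> (r m) a i" and ?b = "\<pi> (r m) b i"
        have pa: "?a \<in> gpoints V E A" by (rule strat_pt[OF wf \<pi>P[rule_format] a i])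
        have pb: "?b \<in> gpoints V E A" by (rule strat_pt[OF wf \<pi>P[rule_format] b i])
        have "gdist V E ends A (\<pi>s a i) (\<pi>s b i) \<le> gdist V E ends A (\<pi>s a i) ?a + gdist V E ends A ?a (\<pi>s b i)"
          by (rule gd_tri[OF wf la(1) pa lb(1)])
        also have "gdist V E ends A ?a (\<pi>s b i) \<le> gdist V E ends A ?a ?b + gdist V E ends A ?b (\<pi>s b i)"
          by (rule gd_tri[OF wf pa pb lb(1)])
        also have "gdist V E ends A (\<pi>s a i) ?a = gdist V E ends A ?a (\<pi>s a i)" by (rule gd_sym[OF wf la(1) pa])
        also have "gdist V E ends A ?a ?b \<le> \<bar>a - b\<bar>" by (rule strat_lip[OF wf \<pi>P[rule_format] a b i])
        finally show "gdist V E ends A (\<pi>s a i) (\<pi>s b i) \<le> gdist V E ends A ?a (\<pi>s a i) + \<bar>a - b\<bar> + gdist V E ends A ?b (\<pi>s b i)"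
          by simp
      qed
    qed
  qed
  have "cost V phi k 0 \<pi>s \<le> ereal j"
    unfolding cost_zero[OF wf]
  proof (intro SUP_least)
    fix t :: real assume "t \<in> {0..}"
    then have t: "0 \<le> t" by simp
    obtain v where v: "v \<in> V" "wlat V phi k \<pi>s t = phi v * idle k \<pi>s v t" using wlat_ex[OF wf] by blast
    have "phi v * idle k \<pi>s v t \<le> j" by (rule lsc[OF wf \<pi>P wl r(1) lim t v(1)])
    then show "ereal (wlat V phi k \<pi>s t) \<le> ereal j" using v(2) by simp
  qed
  moreover have "ereal j \<le> cost V phi k 0 \<pi>s" unfolding J[symmetric] opt_cost_def by (rule INF_lower[OF sP])
  ultimately show ?thesis using sP by (intro bexI[of _ \<pi>s]) auto
qed

end

context
  fixes V :: "'v set" and E :: "'e set" and ends :: "'e \<Rightarrow> 'v \<times> 'v"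
    and A :: "'e \<Rightarrow> real" and phi :: "'v \<Rightarrow> real" and k :: nat
  assumes wf: "wf_graph V E ends A phi"
begin

lemma part1: "0 \<le> T \<Longrightarrow> opt_cost V E ends A phi k T = opt_cost V E ends A phi k 0"
proof (cases T)
  case (real r)
  assume "0 \<le> T" then show ?thesis using opt_fin[OF wf, of r] real by simp
next
  case PInf then show ?thesis using opt_inf[OF wf] by simp
next
  case MInf
  assume "0 \<le> T" then show ?thesis using MInf by simp
qed

lemma part2: assumes "0 \<le> T1" "T1 < T2"
  shows "opt_strategies V E ends A phi k T1 \<subseteq> opt_strategies V E ends A phi k T2"
proof
  fix str assume s: "str \<in> opt_strategies V E ends A phi k T1"
  then have sP: "str \<in> strategies V E ends A k" and c: "cost V phi k T1 str = opt_cost V E ends A phi k T1"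
    by (auto simp: opt_strategies_def)
  obtain r1 where r1: "T1 = ereal r1" "0 \<le> r1" using assms by (cases T1) auto
  have T2: "0 \<le> T2" using assms by simp
  have le: "cost V phi k T2 str \<le> cost V phi k T1 str"
  proof (cases T2)
    case (real r2)
    then show ?thesis using r1 assms cost_anti[OF wf, of r1 r2] by simp
  next
    case PInf then show ?thesis using r1 cost_inf_le[OF wf] by simp
  next
    case MInf then show ?thesis using T2 by simp
  qed
  have ge: "opt_cost V E ends A phi k T2 \<le> cost V phi k T2 str"
    unfolding opt_cost_def by (rule INF_lower[OF sP])
  have "cost V phi k T2 str = opt_cost V E ends A phi k T2"
    using le ge c part1[OF assms(1)] part1[OF T2] by simp
  then show "str \<in> opt_strategies V E ends A phi k T2" using sP by (simp add: opt_strategies_def)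
qed

lemma opt_nonneg: "0 \<le> opt_cost V E ends A phi k 0"
  unfolding opt_cost_def
proof (intro INF_greatest)
  fix str assume "str \<in> strategies V E ends A k"
  have "ereal (wlat V phi k str 0) \<le> cost V phi k 0 str" unfolding cost_zero[OF wf] by (intro SUP_upper) auto
  moreover have "0 \<le> wlat V phi k str 0" by (rule wlat_nonneg[OF wf]) simp
  then have "(0::ereal) \<le> ereal (wlat V phi k str 0)" by simp
  ultimately show "0 \<le> cost V phi k 0 str" by (rule order_trans[rotated])
qed

lemma part3:
  fixes p0 :: "nat \<Rightarrow> ('v, 'e) gpt" and T :: real
  assumes p0: "\<forall>i<k. p0 i \<in> gpoints V E A"
    and TT: "ereal T > ereal (gdiam V E ends A) + opt_cost V E ends A phi k 0 / ereal (Min (phi ` V))"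
  shows "\<exists>str\<in>opt_strategies V E ends A phi k (ereal T). \<forall>i<k. str 0 i = p0 i"
proof -
  define D where "D = gdiam V E ends A"
  define pm where "pm = Min (phi ` V)"
  have pm0: "pm > 0" unfolding pm_def using wfV[OF wf] wfphi[OF wf] by (subst Min_gr_iff) auto
  have pmle: "pm \<le> phi v" if "v \<in> V" for v unfolding pm_def using wfV[OF wf] that by auto
  have J0: "0 \<le> opt_cost V E ends A phi k 0" by (rule opt_nonneg)
  obtain j where j: "opt_cost V E ends A phi k 0 = ereal j"
  proof (cases "opt_cost V E ends A phi k 0")
    case (real r) then show ?thesis using that by blast
  next
    case PInf
    then have "ereal D + opt_cost V E ends A phi k 0 / ereal pm = \<infinity>" using pm0 by simp
    then show ?thesis using TT by (simp add: D_def pm_def)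
  next
    case MInf then show ?thesis using J0 by simp
  qed
  have j0: "0 \<le> j" using J0 j by simp
  have jp: "0 \<le> j / pm" using j0 pm0 by simp
  have "Min (phi ` V) > 0" using pm0 by (simp add: pm_def)
  then have Tgt: "D + j / pm < T" using TT j by (simp add: D_def pm_def)
  obtain v0 where v0: "v0 \<in> V" using wfV[OF wf] by blast
  have v0P: "Vtx v0 \<in> gpoints V E A" using v0 by (simp add: gpoints_def)
  have D0: "0 \<le> D" using gd_le_diam[OF wf v0P v0P] gd_refl[OF wf v0P] by (simp add: D_def)
  obtain \<pi> where \<pi>P: "\<pi> \<in> strategies V E ends A k" and \<pi>c: "cost V phi k 0 \<pi> = ereal j"
    using exists_opt[OF wf j] by blast
  define \<epsilon> where "\<epsilon> = (T - D - j / pm) / 2"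
  have \<epsilon>: "\<epsilon> > 0" using Tgt by (simp add: \<epsilon>_def)
  define D' where "D' = D + \<epsilon>"
  have D'0: "0 \<le> D'" using D0 \<epsilon> by (simp add: D'_def)
  have D'T: "j / pm < T - D'"
  proof -
    obtain q where q: "q = j / pm" by blast
    have "D + q < T" using Tgt q by simp
    then have "q < T - (D + (T - D - q) / 2)" by (simp add: field_simps)
    then show ?thesis unfolding D'_def \<epsilon>_def q by simp
  qed
  have "\<forall>i. \<exists>x. i < k \<longrightarrow> (fst x \<le> D' \<and> snd x 0 = p0 i \<and> snd x (fst x) = \<pi> D' i \<and>
      (\<forall>a. 0 \<le> a \<longrightarrow> a \<le> fst x \<longrightarrow> snd x a \<in> gpoints V E A) \<and>
      (\<forall>a b. 0 \<le> a \<longrightarrow> a \<le> fst x \<longrightarrow> 0 \<le> b \<longrightarrow> b \<le> fst x \<longrightarrow> gdist V E ends A (snd x a) (snd x b) \<le> \<bar>a - b\<bar>) \<and> 0 \<le> fst x)"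
  proof
    fix i
    show "\<exists>x. i < k \<longrightarrow> (fst x \<le> D' \<and> snd x 0 = p0 i \<and> snd x (fst x) = \<pi> D' i \<and>
      (\<forall>a. 0 \<le> a \<longrightarrow> a \<le> fst x \<longrightarrow> snd x a \<in> gpoints V E A) \<and>
      (\<forall>a b. 0 \<le> a \<longrightarrow> a \<le> fst x \<longrightarrow> 0 \<le> b \<longrightarrow> b \<le> fst x \<longrightarrow> gdist V E ends A (snd x a) (snd x b) \<le> \<bar>a - b\<bar>) \<and> 0 \<le> fst x)"
    proof (cases "i < k")
      case False then show ?thesis by simp
    next
      case True
      have a: "p0 i \<in> gpoints V E A" using p0 True by simp
      have b: "\<pi> D' i \<in> gpoints V E A" by (rule strat_pt[OF wf \<pi>P D'0 True])
      have "gdist V E ends A (p0 i) (\<pi> D' i) \<le> D" unfolding D_def by (rule gd_le_diam[OF wf a b])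
      then have "gdist V E ends A (p0 i) (\<pi> D' i) < D'" using \<epsilon> by (simp add: D'_def)
      from gd_less[OF wf a b this] obtain c where c: "gwalk V E ends A (p0 i) (\<pi> D' i) c" "c < D'" by blast
      from gwalk_path[OF wf c(1)] obtain p where p: "p 0 = p0 i" "p c = \<pi> D' i"
        "\<forall>a. 0 \<le> a \<longrightarrow> a \<le> c \<longrightarrow> p a \<in> gpoints V E A"
        "\<forall>a b. 0 \<le> a \<longrightarrow> a \<le> c \<longrightarrow> 0 \<le> b \<longrightarrow> b \<le> c \<longrightarrow> gdist V E ends A (p a) (p b) \<le> \<bar>a - b\<bar>" by blast
      have "0 \<le> c" using gwalk_pts[OF wf c(1)] by simp
      then show ?thesis using p c(2) by (intro exI[of _ "(c, p)"]) auto
    qed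
  qed
  then obtain f where f: "\<forall>i. i < k \<longrightarrow> (fst (f i) \<le> D' \<and> snd (f i) 0 = p0 i \<and> snd (f i) (fst (f i)) = \<pi> D' i \<and>
      (\<forall>a. 0 \<le> a \<longrightarrow> a \<le> fst (f i) \<longrightarrow> snd (f i) a \<in> gpoints V E A) \<and>
      (\<forall>a b. 0 \<le> a \<longrightarrow> a \<le> fst (f i) \<longrightarrow> 0 \<le> b \<longrightarrow> b \<le> fst (f i) \<longrightarrow> gdist V E ends A (snd (f i) a) (snd (f i) b) \<le> \<bar>a - b\<bar>) \<and> 0 \<le> fst (f i))"
    by (rule choice[THEN exE]) blast
  define cc where "cc i = fst (f i)" for i
  define pp where "pp i = snd (f i)" for i
  have cc: "cc i \<le> D'" "0 \<le> cc i" "pp i 0 = p0 i" "pp i (cc i) = \<pi> D' i"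
    "\<forall>a. 0 \<le> a \<longrightarrow> a \<le> cc i \<longrightarrow> pp i a \<in> gpoints V E A"
    "\<forall>a b. 0 \<le> a \<longrightarrow> a \<le> cc i \<longrightarrow> 0 \<le> b \<longrightarrow> b \<le> cc i \<longrightarrow> gdist V E ends A (pp i a) (pp i b) \<le> \<bar>a - b\<bar>"
    if "i < k" for i using f that unfolding cc_def pp_def by blast+
  define \<sigma> where "\<sigma> t i = (if t \<le> cc i then pp i t else if t \<le> D' then \<pi> D' i else \<pi> t i)" for t i
  have \<sigma>pt: "\<sigma> t i \<in> gpoints V E A" if "0 \<le> t" "i < k" for t i
    using cc[OF that(2)] strat_pt[OF wf \<pi>P D'0 that(2)] strat_pt[OF wf \<pi>P that] that by (auto simp: \<sigma>_def)
  have \<sigma>lip: "gdist V E ends A (\<sigma> a i) (\<sigma> b i) \<le> \<bar>a - b\<bar>" if ab: "0 \<le> a" "0 \<le> b" and i: "i < k" for a b i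
  proof -
    note ci = cc[OF i]
    define hi where "hi = max a b + D' + 1"
    have hi: "a \<le> hi" "b \<le> hi" "D' \<le> hi" using ab D'0 by (auto simp: hi_def)
    have P: "\<forall>t. 0 \<le> t \<longrightarrow> t \<le> hi \<longrightarrow> \<sigma> t i \<in> gpoints V E A" using \<sigma>pt i by blast
    have P2: "\<forall>t. cc i \<le> t \<longrightarrow> t \<le> hi \<longrightarrow> \<sigma> t i \<in> gpoints V E A" using \<sigma>pt i ci(2) by auto
    have L1: "\<forall>a b. 0 \<le> a \<longrightarrow> a \<le> cc i \<longrightarrow> 0 \<le> b \<longrightarrow> b \<le> cc i \<longrightarrow> gdist V E ends A (\<sigma> a i) (\<sigma> b i) \<le> \<bar>a - b\<bar>"
      using ci(6) by (simp add: \<sigma>_def)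
    have mid: "\<sigma> t i = \<pi> D' i" if "cc i \<le> t" "t \<le> D'" for t using that ci(4) by (auto simp: \<sigma>_def)
    have L21: "\<forall>a b. cc i \<le> a \<longrightarrow> a \<le> D' \<longrightarrow> cc i \<le> b \<longrightarrow> b \<le> D' \<longrightarrow> gdist V E ends A (\<sigma> a i) (\<sigma> b i) \<le> \<bar>a - b\<bar>"
      using mid gd_refl[OF wf strat_pt[OF wf \<pi>P D'0 i]] by simp
    have top: "\<sigma> t i = \<pi> t i" if "D' \<le> t" for t
    proof (cases "t \<le> cc i")
      case True then have "t = D'" "cc i = D'" using that ci(1) by auto
      then show ?thesis using ci(4) by (simp add: \<sigma>_def)
    next
      case False then show ?thesis using that by (auto simp: \<sigma>_def)
    qed
    have L22: "\<forall>a b. D' \<le> a \<longrightarrow> a \<le> hi \<longrightarrow> D' \<le> b \<longrightarrow> b \<le> hi \<longrightarrow> gdist V E ends A (\<sigma> a i) (\<sigma> b i) \<le> \<bar>a - b\<bar>"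
    proof (intro allI impI)
      fix a b assume "D' \<le> a" "a \<le> hi" "D' \<le> b" "b \<le> hi"
      then show "gdist V E ends A (\<sigma> a i) (\<sigma> b i) \<le> \<bar>a - b\<bar>"
        using top strat_lip[OF wf \<pi>P _ _ i, of a b] D'0 by simp
    qed
    have L2: "\<forall>a b. cc i \<le> a \<longrightarrow> a \<le> hi \<longrightarrow> cc i \<le> b \<longrightarrow> b \<le> hi \<longrightarrow> gdist V E ends A (\<sigma> a i) (\<sigma> b i) \<le> \<bar>a - b\<bar>"
      by (rule glue[OF wf L21 L22 P2 ci(1) hi(3)])
    have "\<forall>a b. 0 \<le> a \<longrightarrow> a \<le> hi \<longrightarrow> 0 \<le> b \<longrightarrow> b \<le> hi \<longrightarrow> gdist V E ends A (\<sigma> a i) (\<sigma> b i) \<le> \<bar>a - b\<bar>"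
      by (rule glue[OF wf L1 L2 P ci(2)]) (use ci(1) hi(3) in simp)
    then show ?thesis using ab hi by blast
  qed
  have \<sigma>P: "\<sigma> \<in> strategies V E ends A k"
    unfolding strategies_def using \<sigma>pt \<sigma>lip by blast
  have \<sigma>0: "\<forall>i<k. \<sigma> 0 i = p0 i" using cc by (auto simp: \<sigma>_def)
  have wle: "wlat V phi k \<sigma> t \<le> wlat V phi k \<pi> t" if t: "T \<le> t" for t
  proof (rule wlat_mono[OF wf], intro ballI)
    fix v assume v: "v \<in> V"
    have t0: "0 \<le> t" using t Tgt D0 jp by linarith
    have "ereal (wlat V phi k \<pi> t) \<le> cost V phi k 0 \<pi>" unfolding cost_zero[OF wf] using t0 by (intro SUP_upper) auto
    then have "wlat V phi k \<pi> t \<le> j" using \<pi>c by simp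
    then have "phi v * idle k \<pi> v t \<le> j" using wlat_ge[OF wf v, where str=\<pi> and t=t and k=k] by simp
    then have "idle k \<pi> v t \<le> j / phi v" using wfphi[OF wf v] by (simp add: pos_le_divide_eq mult.commute)
    also have "\<dots> \<le> j / pm" using j0 pm0 pmle[OF v] by (intro divide_left_mono) auto
    finally have "D' < last_visit k \<pi> v t" using D'T t by (simp add: idle_def)
    moreover have "\<forall>s. D' < s \<longrightarrow> s \<le> t \<longrightarrow> (\<forall>i<k. \<pi> s i = \<sigma> s i)"
    proof (intro allI impI)
      fix s i assume si: "D' < s" "s \<le> t" "i < k"
      then have "cc i < s" using cc(1)[OF si(3)] by linarith
      then show "\<pi> s i = \<sigma> s i" using si by (simp add: \<sigma>_def)
    qed
    ultimately have "last_visit k \<pi> v t = last_visit k \<sigma> v t" by (intro lv_agree[OF wf D'0])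
    then show "idle k \<sigma> v t \<le> idle k \<pi> v t" by (simp add: idle_def)
  qed
  have T0: "0 \<le> T" using Tgt D0 jp by linarith
  have "cost V phi k (ereal T) \<sigma> \<le> ereal j"
    unfolding cost_fin[OF wf]
  proof (intro SUP_least)
    fix t assume "t \<in> {T..}"
    then have t: "T \<le> t" by simp
    have "ereal (wlat V phi k \<pi> t) \<le> cost V phi k 0 \<pi>" unfolding cost_zero[OF wf] using t T0 by (intro SUP_upper) auto
    then show "ereal (wlat V phi k \<sigma> t) \<le> ereal j" using wle[OF t] \<pi>c by simp
  qed
  moreover have "ereal j \<le> cost V phi k (ereal T) \<sigma>"
    using INF_lower[OF \<sigma>P, of "cost V phi k (ereal T)"] part1[of "ereal T"] T0 j
    unfolding opt_cost_def by simp
  ultimately have "cost V phi k (ereal T) \<sigma> = opt_cost V E ends A phi k (ereal T)"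
    using part1[of "ereal T"] T0 j by simp
  then show ?thesis using \<sigma>P \<sigma>0 by (intro bexI[of _ \<sigma>]) (auto simp: opt_strategies_def)
qed

end

theorem mainTheorem2:
  fixes V :: "'v set" and E :: "'e set" and ends :: "'e \<Rightarrow> 'v \<times> 'v"
    and A :: "'e \<Rightarrow> real" and phi :: "'v \<Rightarrow> real" and k :: nat
  assumes "wf_graph V E ends A phi" and "k \<ge> 1"
  shows "(\<forall>T::ereal. 0 \<le> T \<longrightarrow> opt_cost V E ends A phi k T = opt_cost V E ends A phi k 0)
    \<and> (\<forall>T1 T2::ereal. 0 \<le> T1 \<longrightarrow> T1 < T2 \<longrightarrow>
         opt_strategies V E ends A phi k T1 \<subseteq> opt_strategies V E ends A phi k T2)
    \<and> (\<forall>p0 :: nat \<Rightarrow> ('v, 'e) gpt. (\<forall>i<k. p0 i \<in> gpoints V E A) \<longrightarrow>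
         (\<forall>T::real. ereal T > ereal (gdiam V E ends A) + opt_cost V E ends A phi k 0 / ereal (Min (phi ` V)) \<longrightarrow>
            (\<exists>str\<in>opt_strategies V E ends A phi k (ereal T). \<forall>i<k. str 0 i = p0 i)))"
proof (intro conjI allI impI)
  fix T :: ereal assume "0 \<le> T"
  then show "opt_cost V E ends A phi k T = opt_cost V E ends A phi k 0" by (rule part1[OF assms(1)])
next
  fix T1 T2 :: ereal assume "0 \<le> T1" "T1 < T2"
  then show "opt_strategies V E ends A phi k T1 \<subseteq> opt_strategies V E ends A phi k T2" by (rule part2[OF assms(1)])
next
  fix p0 :: "nat \<Rightarrow> ('v, 'e) gpt" and T :: real
  assume "\<forall>i<k. p0 i \<in> gpoints V E A" "ereal T > ereal (gdiam V E ends A) + opt_cost V E ends A phi k 0 / ereal (Min (phi ` V))"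
  then show "\<exists>str\<in>opt_strategies V E ends A phi k (ereal T). \<forall>i<k. str 0 i = p0 i" by (rule part3[OF assms(1)])
qed

end
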